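(* Assume the standing hypotheses (P) and (D') described in the context, let $\epsilon>0$ and $\eta\in(0,\frac\beta2)$. Then there exists $\gamma>0$ such that, almost surely, there exists $\bar n\in\mathbb N$ such that for all $n\ge\bar n$ $$\inf_{\phi\in\mathcal H^{pot}(\epsilon)}\sup_{D\in\mathcal H^{dis}(\epsilon)}\Big(\hat L_n(\nabla\phi,D)+\gamma\hat P^{(\beta/2)}_n(\phi)\Big)=\inf_{\phi\in\mathcal H^{pot}_{\beta/2-\eta}(\epsilon)}\sup_{D\in\mathcal H^{dis}(\epsilon)}\Big(\hat L_n(\nabla\phi,D)+\gamma\hat P^{(\beta/2)}_n(\phi)\Big).$$
   Context: Let $d\in\mathbb N$; $\lambda$ is the restriction of Lebesgue measure to $[0,1]^d$, $G_{\#}\lambda$ the pushforward. $\mu^*$ is a probability measure on $[0,1]^d$ with Lebesgue density $p^*$, $p^*>0$ on $[0,1]^d$, $p^*=0$ outside. On $(\Omega,\mathcal F,\mathbb P)$, $Y,Y_1,Y_2,\dots$ are i.i.d. with law $\mu^*$, $Z,Z_1,Z_2,\dots$ are i.i.d. with law $\lambda$. $L(G,D)=\frac12\mathbb E[\log D(Y)+\log(1-D(G(Z)))]$, $\hat L_n(G,D)=\frac1{2n}\sum_{i=1}^n\log D(Y_i)+\frac1{2n}\sum_{i=1}^n\log(1-D(G(Z_i)))$. If $G_{\#}\lambda$ has density $p$, $D_G=\frac{p^*}{p^*+p}$ on $[0,1]^d$, $D_G=0$ outside. Neural networks with architecture $(l_0,\dots,l_L)$ and activation $\sigma$ realize $x_0\mapsto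 W_Lx_{L-1}+B_L$, $x_k=\sigma(W_kx_{k-1}+B_k)$; ReLU: $\sigma(x)=\max\{x,0\}$, ReCU: $\sigma(x)=\max\{x,0\}^3$. $C^{k,\alpha}$ are Hölder spaces on $[0,1]^d$; $A\ge B$ means $A-B$ positive semidefinite; $d_{JS}$ is the Jensen–Shannon divergence. Hypotheses (P): $p^*\in C^{1,\alpha}([0,1]^d,\mathbb R)$ for some $\alpha\in(0,1)$; $\phi^*\in C^{3,\alpha}([0,1]^d,\mathbb R)$ is the Brenier potential with $\mu^*=(\nabla\phi^* )_{\#}\lambda$; $M\in(1,\infty)$ with $\frac1M\operatorname{Id}\le\operatorname{Hess}\phi^*\le M\operatorname{Id}$ on $[0,1]^d$, and $\beta:=1/M$. For each $\epsilon>0$, $\phi_\epsilon$ is a ReCU network with $\frac1{2M}\operatorname{Id}\le\operatorname{Hess}\phi_\epsilon\le2M\operatorname{Id}$ on $[0,1]^d$ and $d_{JS}(\mu^*,(\nabla\phi_\epsilon)_{\#}\lambda)\le\epsilon$, $\mathcal A^\phi(\epsilon)$ is its architecture, $H(\epsilon)=\|\phi_\epsilon\|_{C^{2,1}}$, $\tilde H(\epsilon)\ge H(\epsilon)$ is fixed, and $\mathcal H^{pot}(\epsilon)$ is the set of all ReCU networks $\phi\colon[0,1]^d\to\mathbb R$ with architecture $\mathcal A^\phi(\epsilon)$ and $\|\phi\|_{C^{2,1}([0,1]^d)}\le\tilde H(\epsilon)$. A function $\phi$ is $\kappa$-strongly convex if $\phi(\frac{u+u'}2)\le\frac{\phi(u)+\phi(u')}2-\frac\kappa8\|u-u'\|^2$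 for all $u,u'\in[0,1]^d$; $\mathcal H^{pot}_\kappa(\epsilon)$ is the set of $\kappa$-strongly convex elements of $\mathcal H^{pot}(\epsilon)$. Hypotheses (D'): for each $\epsilon>0$ there are a ReLU architecture $\mathcal A^D(\epsilon)$ and $D_{\min}(\epsilon)\in(0,1/2)$; $\mathcal H^{dis}(\epsilon)$ is a subset, relatively compact with respect to the supremum norm on $[0,1]^d$, of the set of functions $D\colon\mathbb R^d\to[0,1]$ with $D=0$ outside $[0,1]^d$ and $D|_{[0,1]^d}$ a ReLU network of architecture $\mathcal A^D(\epsilon)$ with values in $[D_{\min}(\epsilon),1-D_{\min}(\epsilon)]$, and for each $\phi\in\mathcal H^{pot}_{\beta/2}(\epsilon)$ it contains a function $D(\nabla\phi)$ of this form with $L(\nabla\phi,D_{\nabla\phi})-L(\nabla\phi,D(\nabla\phi))\le\epsilon$. Penalty: let $m\colon\mathbb N\to\mathbb N$ be increasing with $m(n)\to\infty$, and $U_1,U_2,\dots,U'_1,U'_2,\dots$ independent, uniformly distributed on $[0,1]^d$; $\hat P^{(\kappa)}_n(\phi)=\frac1{m(n)}\sum_{j=1}^{m(n)}\mathrm{ReLU}\big(\phi(\frac{U_j+U'_j}2)-\frac{\phi(U_j)+\phi(U'_j)}2+\frac\kappa8\|U_j-U'_j\|^2\big)$, $\mathrm{ReLU}(x)=\max\{x,0\}$. *)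

theory Defs
  imports "HOL-Analysis.Analysis" "HOL-Probability.Probability"
begin

definition cube :: "(real^'d) set" where
  "cube = {x. \<forall>i. 0 \<le> x $ i \<and> x $ i \<le> 1}"

text \<open>Lebesgue measure restricted to the cube (as measure on the cube), used for push-forwards.\<close>
definition lam_on :: "(real^'d) measure" where
  "lam_on = restrict_space lborel cube"

text \<open>Lebesgue measure restricted to the cube as a measure on R^d (law of the uniform variables).\<close>
definition lam :: "(real^'d) measure" where
  "lam = density lborel (indicator cube)"

definition pushfwd :: "(real^'d \<Rightarrow> real^'d) \<Rightarrow> (real^'d) measure" where
  "pushfwd G = distr lam_on borel G"

definition has_pd :: "'d \<Rightarrow> (real^'d \<Rightarrow> real) \<Rightarrow> real^'d \<Rightarrow> real \<Rightarrow> bool" where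
  "has_pd i g x c \<longleftrightarrow>
     ((\<lambda>t. g (x + t *\<^sub>R axis i 1)) has_real_derivative c)
       (at 0 within {t. x + t *\<^sub>R axis i 1 \<in> cube})"

definition pdi :: "'d \<Rightarrow> (real^'d \<Rightarrow> real) \<Rightarrow> real^'d \<Rightarrow> real" where
  "pdi i g x = (SOME c. has_pd i g x c)"

fun pdl :: "'d list \<Rightarrow> (real^'d \<Rightarrow> real) \<Rightarrow> real^'d \<Rightarrow> real" where
  "pdl [] g = g"
| "pdl (i # is) g = pdi i (pdl is g)"

definition Ck :: "nat \<Rightarrow> (real^'d \<Rightarrow> real) \<Rightarrow> bool" where
  "Ck k g \<longleftrightarrow> (\<forall>is :: 'd list. length is \<le> k \<longrightarrow>
      continuous_on cube (pdl is g) \<and>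
      (\<forall>j js. is = j # js \<longrightarrow> (\<forall>x\<in>cube. \<exists>c. has_pd j (pdl js g) x c)))"

definition holder_semi :: "real \<Rightarrow> (real^'d \<Rightarrow> real) \<Rightarrow> ennreal" where
  "holder_semi \<alpha> g = (SUP xy \<in> {(x, y). x \<in> cube \<and> y \<in> cube \<and> x \<noteq> y}.
      ennreal (\<bar>g (fst xy) - g (snd xy)\<bar> / dist (fst xy) (snd xy) powr \<alpha>))"

definition Ck_alpha :: "nat \<Rightarrow> real \<Rightarrow> (real^'d \<Rightarrow> real) \<Rightarrow> bool" where
  "Ck_alpha k \<alpha> g \<longleftrightarrow> Ck k g \<and>
     (\<forall>is :: 'd list. length is = k \<longrightarrow> holder_semi \<alpha> (pdl is g) < \<infinity>)"

text \<open>Hoelder norm ||g||_{C^{k,alpha}([0,1]^d)} (max-over-multi-indices convention), in [0,\<infinity>].\<close>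
definition ck_norm :: "nat \<Rightarrow> real \<Rightarrow> (real^'d \<Rightarrow> real) \<Rightarrow> ennreal" where
  "ck_norm k \<alpha> g =
     (SUP is \<in> {is :: 'd list. length is \<le> k}. SUP x \<in> cube. ennreal \<bar>pdl is g x\<bar>)
   + (SUP is \<in> {is :: 'd list. length is = k}. holder_semi \<alpha> (pdl is g))"

definition grad :: "(real^'d \<Rightarrow> real) \<Rightarrow> real^'d \<Rightarrow> real^'d" where
  "grad g x = (\<chi> i. pdi i g x)"

definition hess :: "(real^'d \<Rightarrow> real) \<Rightarrow> real^'d \<Rightarrow> real^'d^'d" where
  "hess g x = (\<chi> i j. pdl [i, j] g x)"

definition hess_between :: "real \<Rightarrow> real \<Rightarrow> (real^'d \<Rightarrow> real) \<Rightarrow> bool" where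
  "hess_between a b g \<longleftrightarrow> (\<forall>x\<in>cube. \<forall>v :: real^'d.
      a * (v \<bullet> v) \<le> v \<bullet> (hess g x *v v) \<and> v \<bullet> (hess g x *v v) \<le> b * (v \<bullet> v))"

definition strongly_convex :: "real \<Rightarrow> (real^'d \<Rightarrow> real) \<Rightarrow> bool" where
  "strongly_convex \<kappa> \<phi> \<longleftrightarrow> (\<forall>u\<in>cube. \<forall>u'\<in>cube.
      \<phi> ((1/2) *\<^sub>R (u + u')) \<le> (\<phi> u + \<phi> u') / 2 - \<kappa> / 8 * (norm (u - u'))\<^sup>2)"

type_synonym nn_params = "((nat \<Rightarrow> nat \<Rightarrow> real) \<times> (nat \<Rightarrow> real)) list"

definition aff :: "nat \<Rightarrow> (nat \<Rightarrow> nat \<Rightarrow> real) \<Rightarrow> (nat \<Rightarrow> real) \<Rightarrow> (nat \<Rightarrow> real) \<Rightarrow> nat \<Rightarrow> real" where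
  "aff n W B x = (\<lambda>i. (\<Sum>j<n. W i j * x j) + B i)"

text \<open>Realization for architecture (l_0,...,l_L) and parameters [(W_1,B_1),...,(W_L,B_L)]:
  x_k = sigma(W_k x_{k-1} + B_k) for k < L, output W_L x_{L-1} + B_L.\<close>
fun nn_eval :: "(real \<Rightarrow> real) \<Rightarrow> nat list \<Rightarrow> nn_params \<Rightarrow> (nat \<Rightarrow> real) \<Rightarrow> nat \<Rightarrow> real" where
  "nn_eval \<sigma> [n0, n1] [(W, B)] x = aff n0 W B x"
| "nn_eval \<sigma> (n0 # n1 # n2 # ns) ((W, B) # ps) x =
     nn_eval \<sigma> (n1 # n2 # ns) ps (\<lambda>i. \<sigma> (aff n0 W B x i))"
| "nn_eval \<sigma> _ _ x = (\<lambda>_. 0)"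

definition coord_idx :: "nat \<Rightarrow> 'd::finite" where
  "coord_idx = (SOME f. bij_betw f {..<CARD('d)} (UNIV :: 'd set))"

definition coords :: "real^'d \<Rightarrow> nat \<Rightarrow> real" where
  "coords u = (\<lambda>i. if i < CARD('d) then u $ coord_idx i else 0)"

definition realize :: "(real \<Rightarrow> real) \<Rightarrow> nat list \<Rightarrow> nn_params \<Rightarrow> real^'d \<Rightarrow> real" where
  "realize \<sigma> A ps u = nn_eval \<sigma> A ps (coords u) 0"

definition valid_arch :: "nat list \<Rightarrow> bool" where
  "valid_arch A \<longleftrightarrow> 2 \<le> length A \<and> last A = 1"

definition is_network_on :: "(real^'d) set \<Rightarrow> (real \<Rightarrow> real) \<Rightarrow> nat list \<Rightarrow> (real^'d \<Rightarrow> real) \<Rightarrow> bool" where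
  "is_network_on S \<sigma> A f \<longleftrightarrow> valid_arch A \<and> hd A = CARD('d) \<and>
     (\<exists>ps. length ps + 1 = length A \<and> (\<forall>u\<in>S. f u = realize \<sigma> A ps u))"

definition relu :: "real \<Rightarrow> real" where
  "relu x = max x 0"

definition recu :: "real \<Rightarrow> real" where
  "recu x = (max x 0) ^ 3"

definition mix_measure :: "(real^'d) measure \<Rightarrow> (real^'d) measure \<Rightarrow> (real^'d) measure" where
  "mix_measure P Q = measure_of UNIV (sets borel) (\<lambda>A. (emeasure P A + emeasure Q A) / 2)"

text \<open>Jensen--Shannon divergence (natural logarithm). KL_divergence b M N is KL(N || M).\<close>
definition d_JS :: "(real^'d) measure \<Rightarrow> (real^'d) measure \<Rightarrow> real" where
  "d_JS P Q = KL_divergence (exp 1) (mix_measure P Q) P / 2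
            + KL_divergence (exp 1) (mix_measure P Q) Q / 2"

definition L_gan :: "(real^'d) measure \<Rightarrow> (real^'d \<Rightarrow> real^'d) \<Rightarrow> (real^'d \<Rightarrow> real) \<Rightarrow> real" where
  "L_gan mu G D = ((\<integral>y. ln (D y) \<partial>mu) + (\<integral>z. ln (1 - D (G z)) \<partial>lam_on)) / 2"

text \<open>Optimal discriminant D_G for densities p* and p (density of G_# lambda).\<close>
definition D_opt :: "(real^'d \<Rightarrow> real) \<Rightarrow> (real^'d \<Rightarrow> real) \<Rightarrow> real^'d \<Rightarrow> real" where
  "D_opt pstar p x = (if x \<in> cube then pstar x / (pstar x + p x) else 0)"

definition L_hat :: "(nat \<Rightarrow> 'w \<Rightarrow> real^'d) \<Rightarrow> (nat \<Rightarrow> 'w \<Rightarrow> real^'d) \<Rightarrow> nat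
     \<Rightarrow> (real^'d \<Rightarrow> real^'d) \<Rightarrow> (real^'d \<Rightarrow> real) \<Rightarrow> 'w \<Rightarrow> real" where
  "L_hat Y Z n G D \<omega> = 1 / (2 * real n) * (\<Sum>i=1..n. ln (D (Y i \<omega>)))
                     + 1 / (2 * real n) * (\<Sum>i=1..n. ln (1 - D (G (Z i \<omega>))))"

definition P_hat :: "(nat \<Rightarrow> nat) \<Rightarrow> (nat \<Rightarrow> 'w \<Rightarrow> real^'d) \<Rightarrow> (nat \<Rightarrow> 'w \<Rightarrow> real^'d) \<Rightarrow> real
     \<Rightarrow> nat \<Rightarrow> (real^'d \<Rightarrow> real) \<Rightarrow> 'w \<Rightarrow> real" where
  "P_hat m U U' \<kappa> n \<phi> \<omega> = 1 / real (m n) * (\<Sum>j=1..m n.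
      relu (\<phi> ((1/2) *\<^sub>R (U j \<omega> + U' j \<omega>)) - (\<phi> (U j \<omega>) + \<phi> (U' j \<omega>)) / 2
            + \<kappa> / 8 * (norm (U j \<omega> - U' j \<omega>))\<^sup>2))"

definition H_pot :: "nat list \<Rightarrow> real \<Rightarrow> (real^'d \<Rightarrow> real) set" where
  "H_pot A Ht = {\<phi>. is_network_on UNIV recu A \<phi> \<and> ck_norm 2 1 \<phi> \<le> ennreal Ht}"

definition H_pot_sc :: "real \<Rightarrow> nat list \<Rightarrow> real \<Rightarrow> (real^'d \<Rightarrow> real) set" where
  "H_pot_sc \<kappa> A Ht = {\<phi> \<in> H_pot A Ht. strongly_convex \<kappa> \<phi>}"

definition dis_class :: "nat list \<Rightarrow> real \<Rightarrow> (real^'d \<Rightarrow> real) set" where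
  "dis_class A Dmin = {D. (\<forall>u. 0 \<le> D u \<and> D u \<le> 1) \<and> (\<forall>u. u \<notin> cube \<longrightarrow> D u = 0)
      \<and> is_network_on cube relu A D \<and> (\<forall>u\<in>cube. Dmin \<le> D u \<and> D u \<le> 1 - Dmin)}"

definition rel_compact_sup :: "(real^'d \<Rightarrow> real) set \<Rightarrow> bool" where
  "rel_compact_sup H \<longleftrightarrow> (\<forall>D :: nat \<Rightarrow> real^'d \<Rightarrow> real. (\<forall>k. D k \<in> H) \<longrightarrow>
      (\<exists>r g. strict_mono r \<and> uniform_limit cube (\<lambda>k. D (r k)) g sequentially))"

end

theory Submission
  imports Defs
begin

lemma maxpow_deriv:
  fixes k :: nat assumes "k \<ge> 1"
  shows "((\<lambda>x::real. (max x 0) ^ Suc k) has_real_derivative (real (Suc k) * (max x 0) ^ k)) (at x)"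
proof -
  consider "x > 0" | "x < 0" | "x = 0" by linarith
  then show ?thesis
  proof cases
    case 1
    have "((\<lambda>x::real. x ^ Suc k) has_real_derivative (real (Suc k) * max x 0 ^ k)) (at x)"
      using DERIV_pow[of "Suc k" x] 1 by simp
    then show ?thesis
    proof (rule has_field_derivative_transform_within_open[where S="{0<..}"])
      show "open {0::real<..}" by simp
      show "x \<in> {0<..}" using 1 by simp
    qed (use 1 in auto)
  next
    case 2
    have "((\<lambda>x::real. 0) has_real_derivative 0) (at x)" by simp
    then have "((\<lambda>x::real. (max x 0) ^ Suc k) has_real_derivative 0) (at x)"
    proof (rule has_field_derivative_transform_within_open[where S="{..<0}"])
    qed (use 2 in auto)
    moreover have "real (Suc k) * (max x 0) ^ k = 0" using 2 assms by (simp add: power_0_left)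
    ultimately show ?thesis by metis
  next
    case 3
    have "((\<lambda>h. ((max (0+h) 0) ^ Suc k - (max 0 0) ^ Suc k) / h) \<longlongrightarrow> 0) (at (0::real))"
    proof (rule tendsto_0_le[where K=1 and f="\<lambda>h. h"])
      show "((\<lambda>h::real. h) \<longlongrightarrow> 0) (at 0)" by (simp add: tendsto_ident_at)
      show "\<forall>\<^sub>F h in at (0::real). norm (((max (0+h) 0) ^ Suc k - (max 0 0) ^ Suc k) / h) \<le> norm h * 1"
      proof -
        have ev: "\<forall>\<^sub>F h in at (0::real). h \<in> ball 0 1 \<and> h \<noteq> 0"
          using eventually_at_ball'[of 1 "0::real" UNIV] by simp
        show ?thesis
        proof (rule eventually_mono[OF ev])
        fix h :: real assume "h \<in> ball 0 1 \<and> h \<noteq> 0"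
        then have h1: "\<bar>h\<bar> < 1" by simp
        show "norm (((max (0+h) 0) ^ Suc k - (max 0 0) ^ Suc k) / h) \<le> norm h * 1"
        proof (cases "h > 0")
          case True
          have "h ^ Suc k / h = h ^ k" using True by (simp add: field_simps)
          moreover have "h ^ k \<le> h" using True h1 assms
            by (metis abs_of_pos less_eq_real_def power_decreasing power_one_right)
          moreover have "h^k \<ge> 0" using True by simp
          ultimately show ?thesis using True by simp
        next
          case False then show ?thesis by simp
        qed
      qed
      qed
    qed
    then show ?thesis using 3 assms
      by (simp add: has_field_derivative_iff power_0_left)
  qed
qed

definition C2w :: "(real^'d \<Rightarrow> real) \<Rightarrow> (real^'d \<Rightarrow> 'd \<Rightarrow> real) \<Rightarrow> (real^'d \<Rightarrow> 'd \<Rightarrow> 'd \<Rightarrow> real) \<Rightarrow> bool" where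
  "C2w f f1 f2 \<longleftrightarrow> (\<forall>x. (f has_derivative (\<lambda>h. \<Sum>i\<in>UNIV. h$i * f1 x i)) (at x) \<and>
      (\<forall>i. ((\<lambda>y. f1 y i) has_derivative (\<lambda>h. \<Sum>j\<in>UNIV. h$j * f2 x i j)) (at x)))"

definition C2 :: "(real^'d \<Rightarrow> real) \<Rightarrow> bool" where
  "C2 f \<longleftrightarrow> (\<exists>f1 f2. C2w f f1 f2)"

lemma C2_const: "C2 (\<lambda>x. c)"
proof -
  have "C2w (\<lambda>x. c) (\<lambda>x i. 0) (\<lambda>x i j. 0)"
    unfolding C2w_def by (auto intro: has_derivative_eq_rhs[OF has_derivative_const])
  then show ?thesis unfolding C2_def by blast
qed

lemma C2_coord: fixes k :: "'d::finite" shows "C2 (\<lambda>x::real^'d. x $ k)"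
proof -
  have "C2w (\<lambda>x. x $ k) (\<lambda>x i. if i = k then 1 else 0) (\<lambda>x i j. 0)"
    unfolding C2w_def
  proof (intro allI conjI)
    fix x :: "real^'d"
    have "((\<lambda>x::real^'d. x $ k) has_derivative (\<lambda>h. h $ k)) (at x)"
      by (rule bounded_linear.has_derivative[OF bounded_linear_vec_nth has_derivative_ident])
    moreover have "(\<lambda>h. h $ k) = (\<lambda>h::real^'d. \<Sum>i\<in>UNIV. h $ i * (if i = k then 1 else 0))"
      by (simp add: if_distrib cong: if_cong)
    ultimately show "((\<lambda>x. x $ k) has_derivative (\<lambda>h. \<Sum>i\<in>UNIV. h $ i * (if i = k then 1 else 0))) (at x)"
      by simp
    fix i
    show "((\<lambda>y. if i = k then 1 else 0) has_derivative (\<lambda>h. \<Sum>j\<in>UNIV. h $ j * 0)) (at x)"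
      by (simp add: has_derivative_const)
  qed
  then show ?thesis unfolding C2_def by blast
qed

lemma C2_add: assumes "C2 f" "C2 g" shows "C2 (\<lambda>x. f x + g x)"
proof -
  obtain f1 f2 g1 g2 where f: "C2w f f1 f2" and g: "C2w g g1 g2" using assms unfolding C2_def by blast
  have "C2w (\<lambda>x. f x + g x) (\<lambda>x i. f1 x i + g1 x i) (\<lambda>x i j. f2 x i j + g2 x i j)"
    unfolding C2w_def
  proof (intro allI conjI)
    fix x i
    show "((\<lambda>x. f x + g x) has_derivative (\<lambda>h. \<Sum>i\<in>UNIV. h $ i * (f1 x i + g1 x i))) (at x)"
      using has_derivative_add[of f _ _ g] f g unfolding C2w_def
      by (simp add: distrib_left sum.distrib)
    show "((\<lambda>y. f1 y i + g1 y i) has_derivative (\<lambda>h. \<Sum>j\<in>UNIV. h $ j * (f2 x i j + g2 x i j))) (at x)"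
      using has_derivative_add[of "\<lambda>y. f1 y i" _ _ "\<lambda>y. g1 y i"] f g unfolding C2w_def
      by (simp add: distrib_left sum.distrib)
  qed
  then show ?thesis unfolding C2_def by blast
qed

lemma C2_cmult: assumes "C2 f" shows "C2 (\<lambda>x. c * f x)"
proof -
  obtain f1 f2 where f: "C2w f f1 f2" using assms unfolding C2_def by blast
  have "C2w (\<lambda>x. c * f x) (\<lambda>x i. c * f1 x i) (\<lambda>x i j. c * f2 x i j)"
    unfolding C2w_def
  proof (intro allI conjI)
    fix x i
    have fd: "(f has_derivative (\<lambda>h. \<Sum>i\<in>UNIV. h$i * f1 x i)) (at x)" using f unfolding C2w_def by blast
    show "((\<lambda>x. c * f x) has_derivative (\<lambda>h. \<Sum>i\<in>UNIV. h $ i * (c * f1 x i))) (at x)"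
      using has_derivative_mult_right[OF fd, of c]
      by (simp add: sum_distrib_left mult_ac)
    have f1d: "((\<lambda>y. f1 y i) has_derivative (\<lambda>h. \<Sum>j\<in>UNIV. h$j * f2 x i j)) (at x)"
      using f unfolding C2w_def by blast
    show "((\<lambda>y. c * f1 y i) has_derivative (\<lambda>h. \<Sum>j\<in>UNIV. h $ j * (c * f2 x i j))) (at x)"
      using has_derivative_mult_right[OF f1d, of c]
      by (simp add: sum_distrib_left mult_ac)
  qed
  then show ?thesis unfolding C2_def by blast
qed

lemma C2_sum: assumes "\<And>j. j \<in> S \<Longrightarrow> C2 (f j)" shows "C2 (\<lambda>x. \<Sum>j\<in>S. f j x)"
  using assms
proof (induction S rule: infinite_finite_induct)
  case (infinite S) then show ?case by (simp add: C2_const)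
next
  case empty then show ?case by (simp add: C2_const)
next
  case (insert j S)
  then show ?case by (simp add: C2_add)
qed

lemma recu_deriv: "(recu has_real_derivative (3 * (max s 0)^2)) (at s)"
  using maxpow_deriv[of 2 s] unfolding recu_def by (simp add: numeral_eq_Suc)

lemma recu1_deriv: "((\<lambda>s. 3 * (max s 0)^2) has_real_derivative (6 * max s 0)) (at s)"
  using DERIV_cmult[OF maxpow_deriv[of 1 s], of 3] by (simp add: numeral_eq_Suc)

lemma C2_recu: assumes "C2 f" shows "C2 (\<lambda>x. recu (f x))"
proof -
  obtain f1 f2 where f: "C2w f f1 f2" using assms unfolding C2_def by blast
  define r1 where "r1 = (\<lambda>s::real. 3 * (max s 0)^2)"
  define r2 where "r2 = (\<lambda>s::real. 6 * max s 0)"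
  have "C2w (\<lambda>x. recu (f x)) (\<lambda>x i. r1 (f x) * f1 x i)
          (\<lambda>x i j. r2 (f x) * f1 x j * f1 x i + r1 (f x) * f2 x i j)"
    unfolding C2w_def
  proof (intro allI conjI)
    fix x i
    have fd: "(f has_derivative (\<lambda>h. \<Sum>i\<in>UNIV. h$i * f1 x i)) (at x)" using f unfolding C2w_def by blast
    have f1d: "((\<lambda>y. f1 y i) has_derivative (\<lambda>h. \<Sum>j\<in>UNIV. h$j * f2 x i j)) (at x)"
      using f unfolding C2w_def by blast
    have rd: "(recu has_derivative (*) (r1 (f x))) (at (f x))"
      using recu_deriv[of "f x"] by (simp add: r1_def has_field_derivative_def)
    have r1d: "(r1 has_derivative (*) (r2 (f x))) (at (f x))"
      using recu1_deriv[of "f x"] by (simp add: r1_def r2_def has_field_derivative_def)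
    have c1: "((\<lambda>x. recu (f x)) has_derivative (\<lambda>h. r1 (f x) * (\<Sum>i\<in>UNIV. h$i * f1 x i))) (at x)"
      using has_derivative_compose[OF fd rd] .
    then show "((\<lambda>x. recu (f x)) has_derivative (\<lambda>h. \<Sum>i\<in>UNIV. h $ i * (r1 (f x) * f1 x i))) (at x)"
      by (simp add: sum_distrib_left mult_ac)
    have c2: "((\<lambda>y. r1 (f y)) has_derivative (\<lambda>h. r2 (f x) * (\<Sum>i\<in>UNIV. h$i * f1 x i))) (at x)"
      using has_derivative_compose[OF fd r1d] .
    have c3: "((\<lambda>y. r1 (f y) * f1 y i) has_derivative
        (\<lambda>h. r1 (f x) * (\<Sum>j\<in>UNIV. h$j * f2 x i j) + r2 (f x) * (\<Sum>i\<in>UNIV. h$i * f1 x i) * f1 x i)) (at x)"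
      using has_derivative_mult[OF c2 f1d] .
    show "((\<lambda>y. r1 (f y) * f1 y i) has_derivative
        (\<lambda>h. \<Sum>j\<in>UNIV. h $ j * (r2 (f x) * f1 x j * f1 x i + r1 (f x) * f2 x i j))) (at x)"
      using c3 by (simp add: sum_distrib_left sum_distrib_right sum.distrib distrib_left mult_ac add.commute)
  qed
  then show ?thesis unfolding C2_def by blast
qed

lemma C2_aff: assumes "\<And>j. C2 (\<lambda>u. X u j)" shows "C2 (\<lambda>u. aff n W B (X u) i)"
  unfolding aff_def using assms
  by (intro C2_add C2_sum C2_cmult C2_const) auto

lemma C2_nn: assumes "\<And>j. C2 (\<lambda>u. X u j)"
  shows "C2 (\<lambda>u. nn_eval recu A ps (X u) i)"
  using assms
proof (induction ps arbitrary: A X i)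
  case Nil
  have "nn_eval recu A [] x = (\<lambda>_. 0)" for x
    by (cases "(recu, A, [] :: nn_params, x)" rule: nn_eval.cases) auto
  then show ?case by (simp add: C2_const)
next
  case (Cons p ps)
  obtain W B where p: "p = (W, B)" by fastforce
  consider "A = []" | n0 where "A = [n0]" | n0 n1 where "A = [n0, n1]"
    | n0 n1 n2 ns where "A = n0 # n1 # n2 # ns"
    by (metis list.exhaust)
  then show ?case
  proof cases
    case 3
    then show ?thesis
    proof (cases ps)
      case Nil then show ?thesis using 3 p Cons.prems by (simp add: C2_aff)
    next
      case (Cons a list) then show ?thesis using 3 p by (simp add: C2_const)
    qed
  next
    case 4
    have "C2 (\<lambda>u. nn_eval recu (n1 # n2 # ns) ps (\<lambda>i. recu (aff n0 W B (X u) i)) i)"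
      by (rule Cons.IH) (intro C2_recu C2_aff Cons.prems)
    then show ?thesis using 4 p by simp
  qed (simp_all add: C2_const)
qed

lemma C2_network: assumes "is_network_on UNIV recu A (\<phi> :: real^'d::finite \<Rightarrow> real)" shows "C2 \<phi>"
proof -
  obtain ps where ps: "\<forall>u. \<phi> u = realize recu A ps u"
    using assms unfolding is_network_on_def by auto
  have "C2 (\<lambda>u::real^'d. coords u j)" for j
    unfolding coords_def by (cases "j < CARD('d)") (simp_all add: C2_coord C2_const)
  then have "C2 (\<lambda>u::real^'d. nn_eval recu A ps (coords u) 0)" by (rule C2_nn)
  moreover have "\<phi> = (\<lambda>u. nn_eval recu A ps (coords u) 0)" using ps by (auto simp: realize_def)
  ultimately show ?thesis by simp
qed

lemma cube_axis:
  fixes x :: "real^'d::finite"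
  assumes "x \<in> cube"
  shows "{t. x + t *\<^sub>R axis i 1 \<in> cube} = cbox (- x$i) (1 - x$i)"
  using assms unfolding cube_def
  by (auto simp: axis_def)

lemma pdi_eq:
  fixes x :: "real^'d::finite"
  assumes x: "x \<in> cube" and h: "has_pd i g x c"
  shows "pdi i g x = c"
proof -
  have u: "c' = c" if "has_pd i g x c'" for c'
  proof -
    have S: "{t. x + t *\<^sub>R axis i 1 \<in> cube} = cbox (- x$i) (1 - x$i)" by (rule cube_axis[OF x])
    have 0: "(0::real) \<in> cbox (- x$i) (1 - x$i)" using x unfolding cube_def by auto
    have "- x$i < 1 - x$i" by simp
    moreover note h that
    ultimately show ?thesis
      unfolding has_pd_def S has_real_derivative_iff_has_vector_derivative
      using vector_derivative_unique_within_closed_interval[OF _ 0] by metis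
  qed
  show ?thesis unfolding pdi_def using h u by (metis someI)
qed

lemma line_deriv:
  fixes g :: "real^'d::finite \<Rightarrow> real"
  assumes "(g has_derivative (\<lambda>h. \<Sum>k\<in>UNIV. h$k * g1 k)) (at (u + t *\<^sub>R w))"
  shows "((\<lambda>s. g (u + s *\<^sub>R w)) has_real_derivative (\<Sum>k\<in>UNIV. w$k * g1 k)) (at t)"
proof -
  have l: "((\<lambda>s. u + s *\<^sub>R w) has_derivative (\<lambda>s. s *\<^sub>R w)) (at t)"
    by (auto intro!: derivative_eq_intros)
  have "((\<lambda>s. g (u + s *\<^sub>R w)) has_derivative (\<lambda>s. \<Sum>k\<in>UNIV. (s *\<^sub>R w)$k * g1 k)) (at t)"
    using has_derivative_compose[OF l assms] by simp
  moreover have "(\<lambda>s. \<Sum>k\<in>UNIV. (s *\<^sub>R w)$k * g1 k) = (*) (\<Sum>k\<in>UNIV. w$k * g1 k)"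
    by (rule ext) (simp add: sum_distrib_left mult_ac)
  ultimately show ?thesis unfolding has_field_derivative_def by simp
qed

lemma has_pd_C2:
  fixes f :: "real^'d::finite \<Rightarrow> real" and i :: 'd
  assumes "C2w f f1 f2"
  shows "has_pd i f x (f1 x i)" "has_pd i (\<lambda>y. f1 y j) x (f2 x j i)"
proof -
  have a: "(\<Sum>k\<in>UNIV. axis i 1 $ k * c k) = c i" for c :: "'d \<Rightarrow> real"
  proof -
    have "(\<Sum>k\<in>UNIV. axis i 1 $ k * c k) = (\<Sum>k\<in>UNIV. if k = i then c k else 0)"
      by (intro sum.cong) (auto simp: axis_def)
    then show ?thesis by simp
  qed
  have "((\<lambda>s. f (x + s *\<^sub>R axis i 1)) has_real_derivative (\<Sum>k\<in>UNIV. axis i 1 $ k * f1 x k)) (at 0)"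
    by (rule line_deriv) (use assms in \<open>simp add: C2w_def\<close>)
  then show "has_pd i f x (f1 x i)" unfolding has_pd_def a
    by (rule has_field_derivative_at_within)
  have "((\<lambda>s. f1 (x + s *\<^sub>R axis i 1) j) has_real_derivative (\<Sum>k\<in>UNIV. axis i 1 $ k * f2 x j k)) (at 0)"
    by (rule line_deriv[where g="\<lambda>y. f1 y j"]) (use assms in \<open>simp add: C2w_def\<close>)
  then show "has_pd i (\<lambda>y. f1 y j) x (f2 x j i)" unfolding has_pd_def a
    by (rule has_field_derivative_at_within)
qed

lemma pdl2_C2:
  fixes x :: "real^'d::finite"
  assumes f: "C2w f f1 f2" and x: "x \<in> cube"
  shows "pdl [i, j] f x = f2 x j i"
proof -
  have e: "pdi j f y = f1 y j" if "y \<in> cube" for y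
    by (rule pdi_eq[OF that has_pd_C2(1)[OF f]])
  have "has_pd i (pdi j f) x (f2 x j i)"
    unfolding has_pd_def
  proof (rule has_field_derivative_transform_within[where d=1])
    show "((\<lambda>t. f1 (x + t *\<^sub>R axis i 1) j) has_real_derivative f2 x j i)
        (at 0 within {t. x + t *\<^sub>R axis i 1 \<in> cube})"
      using has_pd_C2(2)[OF f, where i=i and x=x and j=j] unfolding has_pd_def .
    show "0 \<in> {t. x + t *\<^sub>R axis i 1 \<in> cube}" using x by simp
  qed (use e in auto)
  then show ?thesis using pdi_eq[OF x] by simp
qed

definition Qf :: "(real^'d \<Rightarrow> real) \<Rightarrow> real^'d \<Rightarrow> real^'d \<Rightarrow> real" where
  "Qf \<phi> x w = (\<Sum>i\<in>UNIV. \<Sum>j\<in>UNIV. w$i * w$j * pdl [i, j] \<phi> x)"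

lemma cube_seg:
  fixes u :: "real^'d::finite"
  assumes "u \<in> cube" "u' \<in> cube" "0 \<le> s" "s \<le> 1"
  shows "u + s *\<^sub>R (u' - u) \<in> cube"
proof -
  have "0 \<le> u$k + s * (u'$k - u$k) \<and> u$k + s * (u'$k - u$k) \<le> 1" for k
  proof -
    have "u$k + s * (u'$k - u$k) = (1 - s) * u$k + s * u'$k" by algebra
    moreover have "0 \<le> u$k" "u$k \<le> 1" "0 \<le> u'$k" "u'$k \<le> 1" using assms(1,2) unfolding cube_def by auto
    ultimately show ?thesis using assms(3,4)
      by (smt (verit) mult_left_le mult_nonneg_nonneg mult_right_mono)
  qed
  then show ?thesis unfolding cube_def by simp
qed

lemma arith_taylor_aux:
  fixes A B C c x0 x1 a b d :: real
  shows "A = c \<Longrightarrow> B = x0 \<Longrightarrow> C = x1 \<Longrightarrow> x1 = c + d/2 + b/8 \<Longrightarrow> x0 = c - d/2 + a/8 \<Longrightarrow>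
    A - (B + C)/2 = -(a+b)/16"
  by argo

lemma key_taylor:
  fixes \<phi> :: "real^'d::finite \<Rightarrow> real"
  assumes C: "C2 \<phi>" and u: "u \<in> cube" and u': "u' \<in> cube"
  shows "\<exists>s1 s2. 0 \<le> s1 \<and> s1 \<le> 1 \<and> 0 \<le> s2 \<and> s2 \<le> 1 \<and>
     \<phi> ((1/2) *\<^sub>R (u + u')) - (\<phi> u + \<phi> u') / 2
       = - (Qf \<phi> (u + s1 *\<^sub>R (u' - u)) (u' - u) + Qf \<phi> (u + s2 *\<^sub>R (u' - u)) (u' - u)) / 16"
proof -
  obtain f1 f2 where f: "C2w \<phi> f1 f2" using C unfolding C2_def by blast
  define w where "w = u' - u"
  define g where "g = (\<lambda>t. \<phi> (u + t *\<^sub>R w))"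
  define g1 where "g1 = (\<lambda>t. \<Sum>k\<in>UNIV. w$k * f1 (u + t *\<^sub>R w) k)"
  define g2 where "g2 = (\<lambda>t. \<Sum>k\<in>UNIV. w$k * (\<Sum>j\<in>UNIV. w$j * f2 (u + t *\<^sub>R w) k j))"
  define diff where "diff = (\<lambda>m::nat. if m = 0 then g else if m = 1 then g1 else g2)"
  have dg: "(g has_real_derivative g1 t) (at t)" for t
    unfolding g_def g1_def by (rule line_deriv) (use f in \<open>simp add: C2w_def\<close>)
  have dg1: "(g1 has_real_derivative g2 t) (at t)" for t
    unfolding g1_def g2_def
    by (intro DERIV_sum DERIV_cmult line_deriv[where g="\<lambda>y. f1 y _"]) (use f in \<open>simp add: C2w_def\<close>)
  have D: "\<forall>m t. m < 2 \<and> 0 \<le> t \<and> t \<le> 1 \<longrightarrow> DERIV (diff m) t :> diff (Suc m) t"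
    using dg dg1 unfolding diff_def by (auto simp: less_2_cases_iff)
  obtain t2 where t2: "1/2 < t2" "t2 < 1"
    "g 1 = (\<Sum>m<2. (diff m (1/2) / fact m) * (1 - 1/2)^m) + (diff 2 t2 / fact 2) * (1 - 1/2)^2"
  proof -
    have "\<exists>t. 1/2 < t \<and> t < 1 \<and> g 1 = (\<Sum>m<2. (diff m (1/2) / fact m) * (1 - 1/2)^m) + (diff 2 t / fact 2) * (1 - 1/2)^2"
      by (rule Taylor_up[of 2 diff g 0 1 "1/2"]) (use D in \<open>auto simp: diff_def\<close>)
    then show ?thesis using that by blast
  qed
  obtain t1 where t1: "0 < t1" "t1 < 1/2"
    "g 0 = (\<Sum>m<2. (diff m (1/2) / fact m) * (0 - 1/2)^m) + (diff 2 t1 / fact 2) * (0 - 1/2)^2"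
  proof -
    have "\<exists>t. 0 < t \<and> t < 1/2 \<and> g 0 = (\<Sum>m<2. (diff m (1/2) / fact m) * (0 - 1/2)^m) + (diff 2 t / fact 2) * (0 - 1/2)^2"
      by (rule Taylor_down[of 2 diff g 0 1 "1/2"]) (use D in \<open>auto simp: diff_def\<close>)
    then show ?thesis using that by blast
  qed
  have gs: "g 1 = g (1/2) + g1 (1/2) / 2 + g2 t2 / 8" "g 0 = g (1/2) - g1 (1/2) / 2 + g2 t1 / 8"
    using t1(3) t2(3) by (simp_all add: diff_def numeral_2_eq_2 power2_eq_square)
  have Q: "g2 t = Qf \<phi> (u + t *\<^sub>R w) w" if "0 \<le> t" "t \<le> 1" for t
  proof -
    have c: "u + t *\<^sub>R w \<in> cube" using cube_seg[OF u u' that] by (simp add: w_def)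
    have "g2 t = (\<Sum>k\<in>UNIV. \<Sum>j\<in>UNIV. w$k * w$j * pdl [j, k] \<phi> (u + t *\<^sub>R w))"
      unfolding g2_def pdl2_C2[OF f c] by (simp add: sum_distrib_left mult_ac)
    also have "\<dots> = Qf \<phi> (u + t *\<^sub>R w) w"
      unfolding Qf_def by (subst sum.swap) (simp add: mult_ac)
    finally show ?thesis .
  qed
  have "(1/2) *\<^sub>R (u + u') = u + (1/2) *\<^sub>R (u' - u)"
    by (simp add: vec_eq_iff algebra_simps)
  then have "\<phi> ((1/2) *\<^sub>R (u + u')) = g (1/2)"
    unfolding g_def w_def by simp
  moreover have "\<phi> u = g 0" "\<phi> u' = g 1" unfolding g_def w_def by simp_all
  ultimately have "\<phi> ((1/2) *\<^sub>R (u + u')) - (\<phi> u + \<phi> u') / 2 = - (g2 t1 + g2 t2) / 16"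
    using gs by (rule arith_taylor_aux)
  moreover have "g2 t1 = Qf \<phi> (u + t1 *\<^sub>R (u' - u)) (u' - u)" using Q[of t1] t1 by (simp add: w_def)
  moreover have "g2 t2 = Qf \<phi> (u + t2 *\<^sub>R (u' - u)) (u' - u)" using Q[of t2] t2 by (simp add: w_def)
  ultimately show ?thesis using t1 t2
    by (intro exI[of _ t1] exI[of _ t2]) auto
qed

lemma Qf_hess: "w \<bullet> (hess \<phi> x *v w) = Qf \<phi> x w"
  unfolding Qf_def hess_def inner_vec_def matrix_vector_mult_def
  by (simp add: sum_distrib_left mult_ac)

lemma hess_sc:
  fixes \<phi> :: "real^'d::finite \<Rightarrow> real"
  assumes C: "C2 \<phi>" and H: "hess_between a b \<phi>"
  shows "strongly_convex a \<phi>"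
  unfolding strongly_convex_def
proof (intro ballI)
  fix u u' :: "real^'d" assume u: "u \<in> cube" and u': "u' \<in> cube"
  obtain s1 s2 where s: "0 \<le> s1" "s1 \<le> 1" "0 \<le> s2" "s2 \<le> 1" and
    eq: "\<phi> ((1/2) *\<^sub>R (u + u')) - (\<phi> u + \<phi> u') / 2
       = - (Qf \<phi> (u + s1 *\<^sub>R (u' - u)) (u' - u) + Qf \<phi> (u + s2 *\<^sub>R (u' - u)) (u' - u)) / 16"
    using key_taylor[OF C u u'] by blast
  have q: "a * (norm (u' - u))\<^sup>2 \<le> Qf \<phi> (u + s *\<^sub>R (u' - u)) (u' - u)" if "0 \<le> s" "s \<le> 1" for s
  proof -
    have "u + s *\<^sub>R (u' - u) \<in> cube" by (rule cube_seg[OF u u' that])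
    then have "a * ((u' - u) \<bullet> (u' - u)) \<le> (u' - u) \<bullet> (hess \<phi> (u + s *\<^sub>R (u' - u)) *v (u' - u))"
      using H unfolding hess_between_def by blast
    then show ?thesis by (simp add: Qf_hess power2_norm_eq_inner)
  qed
  have n: "a / 8 * (norm (u - u'))\<^sup>2 = (a * (norm (u' - u))\<^sup>2) / 8" by (simp add: norm_minus_commute)
  show "\<phi> ((1/2) *\<^sub>R (u + u')) \<le> (\<phi> u + \<phi> u') / 2 - a / 8 * (norm (u - u'))\<^sup>2"
    unfolding n using eq q[OF s(1,2)] q[OF s(3,4)] by argo
qed

lemma sc_mono: fixes \<phi> :: "real^'d::finite \<Rightarrow> real" shows "strongly_convex k \<phi> \<Longrightarrow> k' \<le> k \<Longrightarrow> strongly_convex k' \<phi>"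
  unfolding strongly_convex_def
proof (intro ballI)
  fix u u' :: "real^'d" assume A: "\<forall>u\<in>cube. \<forall>u'\<in>cube. \<phi> ((1 / 2) *\<^sub>R (u + u')) \<le> (\<phi> u + \<phi> u') / 2 - k / 8 * (norm (u - u'))\<^sup>2"
    and k: "k' \<le> k" and u: "u \<in> cube" "u' \<in> cube"
  have "k' / 8 * (norm (u - u'))\<^sup>2 \<le> k / 8 * (norm (u - u'))\<^sup>2"
    using k by (intro mult_right_mono) auto
  then show "\<phi> ((1 / 2) *\<^sub>R (u + u')) \<le> (\<phi> u + \<phi> u') / 2 - k' / 8 * (norm (u - u'))\<^sup>2"
    using A u by fastforce
qed

lemma ennreal_le_max: "ennreal a \<le> ennreal b \<Longrightarrow> 0 \<le> a \<Longrightarrow> a \<le> max b 0"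
  by (cases "0 \<le> b") (auto simp: ennreal_le_iff ennreal_neg)

lemma ck_bound_val:
  fixes \<phi> :: "real^'d::finite \<Rightarrow> real"
  assumes ck: "ck_norm 2 1 \<phi> \<le> ennreal Ht" and x: "x \<in> cube" and l: "length is \<le> 2"
  shows "\<bar>pdl is \<phi> x\<bar> \<le> max Ht 0"
proof -
  have "ennreal \<bar>pdl is \<phi> x\<bar> \<le> (SUP x \<in> cube. ennreal \<bar>pdl is \<phi> x\<bar>)"
    using x by (rule SUP_upper)
  also have "\<dots> \<le> (SUP is \<in> {is :: 'd list. length is \<le> 2}. SUP x \<in> cube. ennreal \<bar>pdl is \<phi> x\<bar>)"
    using l by (intro SUP_upper) auto
  also have "\<dots> \<le> ck_norm 2 1 \<phi>" unfolding ck_norm_def by simp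
  finally show ?thesis using ck ennreal_le_max by (meson abs_ge_zero order.trans)
qed

lemma ck_bound_lip:
  fixes \<phi> :: "real^'d::finite \<Rightarrow> real"
  assumes ck: "ck_norm 2 1 \<phi> \<le> ennreal Ht" and x: "x \<in> cube" and y: "y \<in> cube" and l: "length is = 2"
  shows "\<bar>pdl is \<phi> x - pdl is \<phi> y\<bar> \<le> max Ht 0 * dist x y"
proof (cases "x = y")
  case True then show ?thesis by simp
next
  case False
  then have d: "dist x y > 0" by simp
  have "ennreal (\<bar>pdl is \<phi> x - pdl is \<phi> y\<bar> / dist x y powr 1) \<le> holder_semi 1 (pdl is \<phi>)"
    unfolding holder_semi_def
    by (rule SUP_upper2[of "(x, y)"]) (use x y False in auto)
  also have "\<dots> \<le> (SUP is \<in> {is :: 'd list. length is = 2}. holder_semi 1 (pdl is \<phi>))"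
    using l by (intro SUP_upper) auto
  also have "\<dots> \<le> ck_norm 2 1 \<phi>" unfolding ck_norm_def by simp
  finally have e: "ennreal (\<bar>pdl is \<phi> x - pdl is \<phi> y\<bar> / dist x y powr 1) \<le> ennreal Ht"
    using ck by (rule order.trans)
  have "\<bar>pdl is \<phi> x - pdl is \<phi> y\<bar> / dist x y powr 1 \<le> max Ht 0"
    by (rule ennreal_le_max[OF e]) simp
  then have "\<bar>pdl is \<phi> x - pdl is \<phi> y\<bar> / dist x y \<le> max Ht 0"
    using d by (simp add: powr_one)
  then show ?thesis using d by (simp add: divide_le_eq mult.commute)
qed

definition n1 :: "real^'d \<Rightarrow> real" where "n1 z = (\<Sum>i\<in>UNIV. \<bar>z$i\<bar>)"

definition Bf :: "('d \<Rightarrow> 'd \<Rightarrow> real) \<Rightarrow> real^'d \<Rightarrow> real^'d \<Rightarrow> real" where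
  "Bf h a b = (\<Sum>i\<in>UNIV. \<Sum>j\<in>UNIV. a$i * b$j * h i j)"

lemma n1_nonneg: "0 \<le> n1 z" unfolding n1_def by (simp add: sum_nonneg)

lemma n1_add: "n1 (x + y) \<le> n1 x + n1 y"
  unfolding n1_def by (simp add: sum.distrib[symmetric] sum_mono abs_triangle_ineq)

lemma n1_diff: "n1 (x - y) \<le> n1 x + n1 y"
  unfolding n1_def by (simp add: sum.distrib[symmetric] sum_mono abs_triangle_ineq4)

lemma n1_scale: "n1 (c *\<^sub>R x) = \<bar>c\<bar> * n1 x"
  unfolding n1_def by (simp add: abs_mult sum_distrib_left)

lemma n1_coord_bound:
  fixes z :: "real^'d::finite"
  shows "(\<And>i. \<bar>z$i\<bar> \<le> c) \<Longrightarrow> n1 z \<le> real CARD('d) * c"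
  unfolding n1_def using sum_mono[of UNIV "\<lambda>i. \<bar>z$i\<bar>" "\<lambda>i. c"] by simp

lemma norm_le_n1: "norm (z::real^'d::finite) \<le> n1 z"
  unfolding n1_def by (rule norm_le_l1_cart)

lemma n1_le_norm: "n1 (z::real^'d::finite) \<le> real CARD('d) * norm z"
  by (rule n1_coord_bound) (rule component_le_norm_cart)

lemma bil_bound:
  fixes a b :: "real^'d::finite"
  assumes "\<And>i j. \<bar>h i j\<bar> \<le> c"
  shows "\<bar>Bf h a b\<bar> \<le> c * n1 a * n1 b"
proof -
  have "\<bar>Bf h a b\<bar> \<le> (\<Sum>i\<in>UNIV. \<Sum>j\<in>UNIV. \<bar>a$i * b$j * h i j\<bar>)"
    unfolding Bf_def by (rule order.trans[OF sum_abs sum_mono]) (rule sum_abs)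
  also have "\<dots> \<le> (\<Sum>i\<in>UNIV. \<Sum>j\<in>UNIV. c * (\<bar>a$i\<bar> * \<bar>b$j\<bar>))"
    by (intro sum_mono) (simp add: abs_mult mult_left_mono assms mult.commute[of c] mult_nonneg_nonneg)
  also have "\<dots> = c * ((\<Sum>i\<in>UNIV. \<bar>a$i\<bar>) * (\<Sum>j\<in>UNIV. \<bar>b$j\<bar>))"
    by (subst sum_product) (simp add: sum_distrib_left mult_ac)
  also have "\<dots> = c * n1 a * n1 b"
    unfolding n1_def by (simp add: mult.assoc)
  finally show ?thesis .
qed

lemma Qf_Bf: "Qf \<phi> x z = Bf (\<lambda>i j. pdl [i, j] \<phi> x) z z"
  unfolding Qf_def Bf_def ..

lemma Qf_scale: "Qf \<phi> x (c *\<^sub>R z) = c\<^sup>2 * Qf \<phi> x z"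
  unfolding Qf_def by (simp add: sum_distrib_left power2_eq_square mult_ac)

lemma Qf_zero: "Qf \<phi> x 0 = 0"
  unfolding Qf_def by simp

lemma Qf_lip_x:
  fixes \<phi> :: "real^'d::finite \<Rightarrow> real"
  assumes L: "\<And>i j. \<bar>pdl [i, j] \<phi> x - pdl [i, j] \<phi> y\<bar> \<le> H * n1 (x - y)"
  shows "\<bar>Qf \<phi> x z - Qf \<phi> y z\<bar> \<le> H * n1 (x - y) * n1 z ^ 2"
proof -
  have "Qf \<phi> x z - Qf \<phi> y z = Bf (\<lambda>i j. pdl [i, j] \<phi> x - pdl [i, j] \<phi> y) z z"
    unfolding Qf_def Bf_def by (simp add: sum_subtractf algebra_simps)
  also have "\<bar>\<dots>\<bar> \<le> H * n1 (x - y) * n1 z * n1 z"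
    by (rule bil_bound) (rule L)
  finally show ?thesis by (simp add: power2_eq_square mult_ac)
qed

lemma Qf_lip_z:
  fixes \<phi> :: "real^'d::finite \<Rightarrow> real"
  assumes B: "\<And>i j. \<bar>pdl [i, j] \<phi> x\<bar> \<le> H"
  shows "\<bar>Qf \<phi> x z - Qf \<phi> x z'\<bar> \<le> H * n1 (z - z') * (n1 z + n1 z')"
proof -
  let ?h = "\<lambda>i j. pdl [i, j] \<phi> x"
  have "Qf \<phi> x z - Qf \<phi> x z' = Bf ?h (z - z') z + Bf ?h z' (z - z')"
    unfolding Qf_def Bf_def by (simp add: sum_subtractf sum.distrib[symmetric] algebra_simps)
  moreover have "\<bar>Bf ?h (z - z') z\<bar> \<le> H * n1 (z - z') * n1 z" by (rule bil_bound) (rule B)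
  moreover have "\<bar>Bf ?h z' (z - z')\<bar> \<le> H * n1 z' * n1 (z - z')" by (rule bil_bound) (rule B)
  ultimately show ?thesis by (simp add: algebra_simps)
qed

definition gridpts :: "nat \<Rightarrow> (real^'d) set" where
  "gridpts N = {a. \<forall>i. \<exists>k<N. a$i = real k / real N}"

definition gbox :: "nat \<Rightarrow> real^'d \<Rightarrow> (real^'d) set" where
  "gbox N a = {x. \<forall>i. a$i \<le> x$i \<and> x$i \<le> a$i + 1 / real N}"

definition snap :: "nat \<Rightarrow> real^'d \<Rightarrow> real^'d" where
  "snap N y = (\<chi> i. real (min (nat \<lfloor>y$i * real N\<rfloor>) (N - 1)) / real N)"

lemma finite_gridpts: "finite (gridpts N :: (real^'d::finite) set)"
proof -
  have "(gridpts N :: (real^'d) set) \<subseteq> (\<lambda>f. \<chi> i. real (f i) / real N) ` (UNIV \<rightarrow>\<^sub>E {..<N})"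
  proof
    fix a :: "real^'d" assume "a \<in> gridpts N"
    then have "\<forall>i. \<exists>k. k < N \<and> a$i = real k / real N" unfolding gridpts_def by auto
    then obtain f where f: "\<And>i. f i < N \<and> a$i = real (f i) / real N" by metis
    have "a = (\<chi> i. real (f i) / real N)" using f by (simp add: vec_eq_iff)
    moreover have "f \<in> UNIV \<rightarrow>\<^sub>E {..<N}" using f by auto
    ultimately show "a \<in> (\<lambda>f. \<chi> i. real (f i) / real N) ` (UNIV \<rightarrow>\<^sub>E {..<N})" by blast
  qed
  moreover have "finite (UNIV \<rightarrow>\<^sub>E {..<N} :: ('d \<Rightarrow> nat) set)" by (intro finite_PiE) auto
  ultimately show ?thesis by (meson finite_imageI finite_subset)
qed

lemma snap_props:
  fixes y :: "real^'d::finite"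
  assumes N: "N \<ge> 1" and y: "y \<in> cube"
  shows "snap N y \<in> gridpts N" "y \<in> gbox N (snap N y)"
proof -
  have *: "real (min (nat \<lfloor>y$i * real N\<rfloor>) (N - 1)) / real N \<le> y$i \<and>
        y$i \<le> real (min (nat \<lfloor>y$i * real N\<rfloor>) (N - 1)) / real N + 1 / real N" for i
  proof -
    have y0: "0 \<le> y$i" "y$i \<le> 1" using y unfolding cube_def by auto
    define k where "k = nat \<lfloor>y$i * real N\<rfloor>"
    have Np: "real N > 0" using N by simp
    have f0: "\<lfloor>y$i * real N\<rfloor> \<ge> 0" using y0 Np by simp
    have k1: "real k \<le> y$i * real N" using f0 unfolding k_def by linarith
    have k2: "y$i * real N < real k + 1" using f0 unfolding k_def by linarith
    show ?thesis
    proof (cases "k \<le> N - 1")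
      case True
      then have m: "min k (N - 1) = k" by simp
      have "real k / real N \<le> y$i" using k1 Np by (simp add: divide_le_eq mult.commute)
      moreover have "y$i \<le> real k / real N + 1 / real N"
        using k2 Np by (simp add: add_divide_distrib[symmetric] le_divide_eq mult.commute)
      ultimately show ?thesis using m unfolding k_def by simp
    next
      case False
      then have m: "min k (N - 1) = N - 1" by simp
      have "real N \<le> real k" using False by simp
      then have "real N \<le> y$i * real N" using k1 by linarith
      then have "y$i = 1" using y0 Np by (simp add: mult_le_cancel_right2)
      moreover have "real (N - 1) / real N + 1 / real N = 1" using N Np
        by (simp add: of_nat_diff add_divide_distrib[symmetric])
      moreover have "real (N - 1) / real N \<le> 1" using N by simp
      ultimately show ?thesis using m unfolding k_def by simp
    qed
  qed
  show "y \<in> gbox N (snap N y)" unfolding gbox_def snap_def using * by simp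
  show "snap N y \<in> gridpts N" unfolding gridpts_def snap_def using N
    by (auto intro!: exI[of _ "min (nat \<lfloor>y$_ * real N\<rfloor>) (N - 1)"])
qed

lemma gbox_cube:
  fixes a :: "real^'d::finite"
  assumes N: "N \<ge> 1" and a: "a \<in> gridpts N"
  shows "gbox N a \<subseteq> cube"
proof
  fix x assume x: "x \<in> gbox N a"
  have "0 \<le> x$i \<and> x$i \<le> 1" for i
  proof -
    obtain k where k: "k < N" "a$i = real k / real N" using a unfolding gridpts_def by blast
    have "a$i + 1 / real N = real (k + 1) / real N" using k by (simp add: add_divide_distrib)
    also have "\<dots> \<le> 1" using k by simp
    finally have ub: "a$i + 1 / real N \<le> 1" .
    have "a$i \<le> x$i" "x$i \<le> a$i + 1 / real N" using x unfolding gbox_def by auto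
    moreover have "0 \<le> a$i" using k by simp
    ultimately show ?thesis using ub by linarith
  qed
  then show "x \<in> cube" unfolding cube_def by simp
qed

lemma gbox_close:
  assumes "p \<in> gbox N a" "y \<in> gbox N a"
  shows "\<bar>p$i - y$i\<bar> \<le> 1 / real N"
proof -
  have "a$i \<le> p$i" "p$i \<le> a$i + 1 / real N" "a$i \<le> y$i" "y$i \<le> a$i + 1 / real N"
    using assms unfolding gbox_def by auto
  then show ?thesis by linarith
qed

lemma p0_exists:
  fixes \<xi> v :: "real^'d::finite"
  assumes \<xi>: "\<xi> \<in> cube" and v: "\<And>i. \<bar>v$i\<bar> \<le> 1"
  shows "\<exists>p0. p0 \<in> cube \<and> p0 + v \<in> cube \<and> (\<forall>i. \<bar>p0$i - \<xi>$i\<bar> \<le> \<bar>v$i\<bar>)"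
proof -
  define p0 where "p0 = (\<chi> i. if v$i \<ge> 0 then min (\<xi>$i) (1 - v$i) else max (\<xi>$i) (- v$i))"
  have c: "0 \<le> \<xi>$i \<and> \<xi>$i \<le> 1" for i using \<xi> unfolding cube_def by auto
  have "0 \<le> p0$i \<and> p0$i \<le> 1 \<and> 0 \<le> p0$i + v$i \<and> p0$i + v$i \<le> 1 \<and> \<bar>p0$i - \<xi>$i\<bar> \<le> \<bar>v$i\<bar>" for i
    using c[of i] v[of i] unfolding p0_def by (auto simp: min_def max_def)
  then show ?thesis unfolding cube_def by (intro exI[of _ p0]) auto
qed

lemma viol_point:
  fixes \<phi> :: "real^'d::finite \<Rightarrow> real"
  assumes C: "C2 \<phi>" and nsc: "\<not> strongly_convex \<kappa> \<phi>"
  shows "\<exists>\<xi>\<in>cube. \<exists>w. w \<noteq> 0 \<and> Qf \<phi> \<xi> w < \<kappa> * (norm w)\<^sup>2"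
proof -
  obtain u u' where u: "u \<in> cube" and u': "u' \<in> cube" and
    gt: "\<phi> ((1/2) *\<^sub>R (u + u')) > (\<phi> u + \<phi> u') / 2 - \<kappa> / 8 * (norm (u - u'))\<^sup>2"
    using nsc unfolding strongly_convex_def by (auto simp: not_le)
  obtain s1 s2 where s: "0 \<le> s1" "s1 \<le> 1" "0 \<le> s2" "s2 \<le> 1" and
    eq: "\<phi> ((1/2) *\<^sub>R (u + u')) - (\<phi> u + \<phi> u') / 2
       = - (Qf \<phi> (u + s1 *\<^sub>R (u' - u)) (u' - u) + Qf \<phi> (u + s2 *\<^sub>R (u' - u)) (u' - u)) / 16"
    using key_taylor[OF C u u'] by blast
  define w where "w = u' - u"
  have n: "\<kappa> / 8 * (norm (u - u'))\<^sup>2 = (\<kappa> * (norm w)\<^sup>2) / 8" by (simp add: norm_minus_commute w_def)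
  have sum: "Qf \<phi> (u + s1 *\<^sub>R w) w + Qf \<phi> (u + s2 *\<^sub>R w) w < 2 * (\<kappa> * (norm w)\<^sup>2)"
    using gt eq unfolding n w_def[symmetric] by argo
  have w0: "w \<noteq> 0"
  proof
    assume "w = 0" then show False using sum by (simp add: Qf_zero)
  qed
  have c1: "u + s1 *\<^sub>R w \<in> cube" "u + s2 *\<^sub>R w \<in> cube"
    using cube_seg[OF u u'] s unfolding w_def by auto
  show ?thesis
  proof (cases "Qf \<phi> (u + s1 *\<^sub>R w) w < \<kappa> * (norm w)\<^sup>2")
    case True then show ?thesis using c1 w0 by blast
  next
    case False
    then have "Qf \<phi> (u + s2 *\<^sub>R w) w < \<kappa> * (norm w)\<^sup>2" using sum by linarith
    then show ?thesis using c1 w0 by blast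
  qed
qed

lemma viol_scaled:
  fixes \<phi> :: "real^'d::finite \<Rightarrow> real"
  assumes w0: "w \<noteq> 0" and Q: "Qf \<phi> \<xi> w < \<kappa> * (norm w)\<^sup>2" and t: "t > 0"
  shows "\<exists>v. norm v = t \<and> Qf \<phi> \<xi> v < \<kappa> * t\<^sup>2"
proof -
  define c where "c = t / norm w"
  have c: "c > 0" using t w0 by (simp add: c_def)
  have "norm (c *\<^sub>R w) = t" using t w0 by (simp add: c_def)
  moreover have "Qf \<phi> \<xi> (c *\<^sub>R w) < \<kappa> * t\<^sup>2"
  proof -
    have "Qf \<phi> \<xi> (c *\<^sub>R w) = c\<^sup>2 * Qf \<phi> \<xi> w" by (rule Qf_scale)
    also have "\<dots> < c\<^sup>2 * (\<kappa> * (norm w)\<^sup>2)" using Q c by simp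
    also have "\<dots> = \<kappa> * t\<^sup>2" using w0 by (simp add: c_def power_divide)
    finally show ?thesis .
  qed
  ultimately show ?thesis by blast
qed

lemma box_bound:
  fixes \<phi> :: "real^'d::finite \<Rightarrow> real"
  defines "Dn \<equiv> real CARD('d)"
  assumes C: "C2 \<phi>"
    and HB: "\<And>x i j. x \<in> cube \<Longrightarrow> \<bar>pdl [i, j] \<phi> x\<bar> \<le> H"
    and HL: "\<And>x y i j. x \<in> cube \<Longrightarrow> y \<in> cube \<Longrightarrow> \<bar>pdl [i, j] \<phi> x - pdl [i, j] \<phi> y\<bar> \<le> H * dist x y"
    and H0: "H \<ge> 0"
    and \<xi>: "\<xi> \<in> cube" and Qv: "Qf \<phi> \<xi> v < \<kappa> * t\<^sup>2" and nv: "norm v = t"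
    and p0: "\<And>i. \<bar>p0$i - \<xi>$i\<bar> \<le> t"
    and p: "p \<in> cube" and q: "q \<in> cube"
    and pc: "\<And>i. \<bar>p$i - p0$i\<bar> \<le> h" and qc: "\<And>i. \<bar>q$i - (p0 + v)$i\<bar> \<le> h"
    and h0: "0 \<le> h" and ht: "h \<le> t" and hDt: "2 * Dn * h \<le> t"
    and k0: "0 \<le> \<kappa>" and e0: "0 \<le> \<eta>" and ke: "\<kappa> + \<eta> \<le> 1"
    and A1: "45 * H * Dn^3 * t^3 + 8 * H * Dn^2 * h * t + 4 * Dn * h * t \<le> \<eta> * t\<^sup>2 / 2"
  shows "\<eta> * t\<^sup>2 / 16 \<le> \<phi> ((1/2) *\<^sub>R (p + q)) - (\<phi> p + \<phi> q) / 2 + (\<kappa> + \<eta>) / 8 * (norm (p - q))\<^sup>2"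
proof -
  have Dn1: "Dn \<ge> 1" unfolding Dn_def by (simp add: Suc_le_eq)
  have t0: "t \<ge> 0" using nv by auto
  define z where "z = q - p"
  define e where "e = z - v"
  have ei: "\<bar>e$i\<bar> \<le> 2 * h" for i
  proof -
    have "e$i = (q$i - (p0 + v)$i) - (p$i - p0$i)" unfolding e_def z_def by simp
    then show ?thesis using pc[of i] qc[of i] by linarith
  qed
  have ne: "n1 e \<le> Dn * (2 * h)" unfolding Dn_def by (rule n1_coord_bound) (rule ei)
  have nv1: "n1 v \<le> Dn * t" unfolding Dn_def using n1_le_norm[of v] nv by simp
  have zve: "z = v + e" unfolding e_def by simp
  have nz: "n1 z \<le> 3 * Dn * t"
  proof -
    have "n1 z \<le> n1 v + n1 e" unfolding zve by (rule n1_add)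
    moreover have "Dn * h \<le> Dn * t" using ht Dn1 by simp
    ultimately show ?thesis using ne nv1 by linarith
  qed
  have nz0: "0 \<le> n1 z" by (rule n1_nonneg)
  obtain s1 s2 where s: "0 \<le> s1" "s1 \<le> 1" "0 \<le> s2" "s2 \<le> 1" and
    eq: "\<phi> ((1/2) *\<^sub>R (p + q)) - (\<phi> p + \<phi> q) / 2
       = - (Qf \<phi> (p + s1 *\<^sub>R (q - p)) (q - p) + Qf \<phi> (p + s2 *\<^sub>R (q - p)) (q - p)) / 16"
    using key_taylor[OF C p q] by blast
  define E where "E = 45 * H * Dn^3 * t^3 + 8 * H * Dn^2 * h * t"
  have Qk: "Qf \<phi> (p + s *\<^sub>R z) z \<le> \<kappa> * t\<^sup>2 + E" if s: "0 \<le> s" "s \<le> 1" for s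
  proof -
    define xk where "xk = p + s *\<^sub>R z"
    have xk: "xk \<in> cube" unfolding xk_def z_def by (rule cube_seg[OF p q s])
    have d1: "n1 (xk - \<xi>) \<le> 5 * Dn * t"
    proof -
      have "xk - \<xi> = ((p - p0) + (p0 - \<xi>)) + s *\<^sub>R z" unfolding xk_def by simp
      then have "n1 (xk - \<xi>) \<le> n1 ((p - p0) + (p0 - \<xi>)) + n1 (s *\<^sub>R z)" by (metis n1_add)
      also have "\<dots> \<le> n1 (p - p0) + n1 (p0 - \<xi>) + n1 (s *\<^sub>R z)" using n1_add by (metis add_right_mono)
      also have "n1 (s *\<^sub>R z) \<le> n1 z" using s nz0 by (simp add: n1_scale mult_left_le_one_le)
      also have "n1 (p - p0) \<le> Dn * h" unfolding Dn_def by (rule n1_coord_bound) (simp add: pc)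
      also have "n1 (p0 - \<xi>) \<le> Dn * t" unfolding Dn_def by (rule n1_coord_bound) (simp add: p0)
      finally have "n1 (xk - \<xi>) \<le> Dn * h + Dn * t + n1 z" by simp
      moreover have "Dn * h \<le> Dn * t" using ht Dn1 by simp
      ultimately show ?thesis using nz by linarith
    qed
    have L: "\<bar>pdl [i, j] \<phi> xk - pdl [i, j] \<phi> \<xi>\<bar> \<le> H * n1 (xk - \<xi>)" for i j
    proof -
      have "\<bar>pdl [i, j] \<phi> xk - pdl [i, j] \<phi> \<xi>\<bar> \<le> H * dist xk \<xi>" by (rule HL[OF xk \<xi>])
      also have "\<dots> \<le> H * n1 (xk - \<xi>)" using H0 norm_le_n1[of "xk - \<xi>"] by (simp add: dist_norm mult_left_mono)
      finally show ?thesis .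
    qed
    have a1: "\<bar>Qf \<phi> xk z - Qf \<phi> \<xi> z\<bar> \<le> H * n1 (xk - \<xi>) * n1 z ^ 2" by (rule Qf_lip_x) (rule L)
    have a2: "\<bar>Qf \<phi> \<xi> z - Qf \<phi> \<xi> v\<bar> \<le> H * n1 (z - v) * (n1 z + n1 v)" by (rule Qf_lip_z) (rule HB[OF \<xi>])
    have b1: "H * n1 (xk - \<xi>) * n1 z ^ 2 \<le> H * (5 * Dn * t) * (3 * Dn * t) ^ 2"
      using Dn1 by (intro mult_mono mult_left_mono power_mono d1 nz nz0 H0 n1_nonneg) (auto simp: t0 H0 intro!: mult_nonneg_nonneg)
    have b2: "H * n1 (z - v) * (n1 z + n1 v) \<le> H * (Dn * (2 * h)) * (3 * Dn * t + Dn * t)"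
    proof -
      have "n1 (z - v) \<le> Dn * (2 * h)" using ne unfolding e_def .
      moreover have "n1 z + n1 v \<le> 3 * Dn * t + Dn * t" using nz nv1 by linarith
      ultimately show ?thesis
        using Dn1 by (intro mult_mono mult_left_mono) (auto simp: H0 n1_nonneg add_nonneg_nonneg h0 t0 intro!: mult_nonneg_nonneg)
    qed
    have "H * (5 * Dn * t) * (3 * Dn * t) ^ 2 + H * (Dn * (2 * h)) * (3 * Dn * t + Dn * t) = E"
      unfolding E_def by (simp add: power2_eq_square power3_eq_cube algebra_simps)
    then show ?thesis using a1 a2 b1 b2 Qv unfolding xk_def by linarith
  qed
  have Q1: "Qf \<phi> (p + s1 *\<^sub>R (q - p)) (q - p) \<le> \<kappa> * t\<^sup>2 + E" using Qk[OF s(1,2)] unfolding z_def .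
  have Q2: "Qf \<phi> (p + s2 *\<^sub>R (q - p)) (q - p) \<le> \<kappa> * t\<^sup>2 + E" using Qk[OF s(3,4)] unfolding z_def .
  have nzl: "t - 2 * Dn * h \<le> norm z"
  proof -
    have "norm v \<le> norm z + norm e" unfolding e_def by (metis add_diff_cancel_left' diff_add_cancel norm_triangle_ineq4 norm_minus_commute)
    moreover have "norm e \<le> n1 e" by (rule norm_le_n1)
    ultimately show ?thesis using ne nv by linarith
  qed
  have nz2: "t\<^sup>2 - 4 * Dn * h * t \<le> (norm z)\<^sup>2"
  proof -
    have "(t - 2 * Dn * h)\<^sup>2 \<le> (norm z)\<^sup>2" using nzl hDt by (intro power_mono) auto
    moreover have "(t - 2 * Dn * h)\<^sup>2 = t\<^sup>2 - 4 * Dn * h * t + (2 * Dn * h)\<^sup>2" by (simp add: power2_eq_square algebra_simps)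
    moreover have "(2 * Dn * h)\<^sup>2 \<ge> 0" by simp
    ultimately show ?thesis by linarith
  qed
  have npq: "norm (p - q) = norm z" unfolding z_def by (rule norm_minus_commute)
  have m1: "(\<kappa> + \<eta>) * (t\<^sup>2 - 4 * Dn * h * t) \<le> (\<kappa> + \<eta>) * (norm z)\<^sup>2"
    using nz2 k0 e0 by (intro mult_left_mono) auto
  have m2: "(\<kappa> + \<eta>) * (4 * Dn * h * t) \<le> 4 * Dn * h * t"
    using ke k0 e0 Dn1 h0 t0 by (intro mult_left_le_one_le) auto
  have m3: "(\<kappa> + \<eta>) * (t\<^sup>2 - 4 * Dn * h * t) = \<kappa> * t\<^sup>2 + \<eta> * t\<^sup>2 - (\<kappa> + \<eta>) * (4 * Dn * h * t)"
    by (simp add: algebra_simps)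
  have A1': "E + 4 * Dn * h * t \<le> \<eta> * t\<^sup>2 / 2" using A1 unfolding E_def by simp
  show ?thesis
    unfolding eq npq using Q1 Q2 m1 m2 m3 A1' by argo
qed

lemma viol_box:
  fixes \<phi> :: "real^'d::finite \<Rightarrow> real"
  defines "Dn \<equiv> real CARD('d)"
  assumes C: "C2 \<phi>"
    and HB: "\<And>x i j. x \<in> cube \<Longrightarrow> \<bar>pdl [i, j] \<phi> x\<bar> \<le> H"
    and HL: "\<And>x y i j. x \<in> cube \<Longrightarrow> y \<in> cube \<Longrightarrow> \<bar>pdl [i, j] \<phi> x - pdl [i, j] \<phi> y\<bar> \<le> H * dist x y"
    and H0: "H \<ge> 0"
    and nsc: "\<not> strongly_convex \<kappa> \<phi>"
    and N: "N \<ge> 1" and t: "0 < t" "t \<le> 1" and ht: "1 / real N \<le> t" and hDt: "2 * Dn * (1 / real N) \<le> t"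
    and k0: "0 \<le> \<kappa>" and e0: "0 \<le> \<eta>" and ke: "\<kappa> + \<eta> \<le> 1"
    and A1: "45 * H * Dn^3 * t^3 + 8 * H * Dn^2 * (1 / real N) * t + 4 * Dn * (1 / real N) * t \<le> \<eta> * t\<^sup>2 / 2"
  shows "\<exists>a\<in>gridpts N. \<exists>b\<in>gridpts N. \<forall>p\<in>gbox N a. \<forall>q\<in>gbox N b.
     \<eta> * t\<^sup>2 / 16 \<le> \<phi> ((1/2) *\<^sub>R (p + q)) - (\<phi> p + \<phi> q) / 2 + (\<kappa> + \<eta>) / 8 * (norm (p - q))\<^sup>2"
proof -
  obtain \<xi> w where \<xi>: "\<xi> \<in> cube" and w0: "w \<noteq> 0" and Qw: "Qf \<phi> \<xi> w < \<kappa> * (norm w)\<^sup>2"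
    using viol_point[OF C nsc] by blast
  obtain v where nv: "norm v = t" and Qv: "Qf \<phi> \<xi> v < \<kappa> * t\<^sup>2"
    using viol_scaled[OF w0 Qw t(1)] by blast
  have vi: "\<bar>v$i\<bar> \<le> t" for i using component_le_norm_cart[of v i] nv by simp
  obtain p0 where p0: "p0 \<in> cube" "p0 + v \<in> cube" and p0c: "\<And>i. \<bar>p0$i - \<xi>$i\<bar> \<le> \<bar>v$i\<bar>"
    using p0_exists[OF \<xi>, of v] vi t by (meson order.trans)
  define a where "a = snap N p0"
  define b where "b = snap N (p0 + v)"
  have a: "a \<in> gridpts N" "p0 \<in> gbox N a" using snap_props[OF N p0(1)] unfolding a_def by auto
  have b: "b \<in> gridpts N" "p0 + v \<in> gbox N b" using snap_props[OF N p0(2)] unfolding b_def by auto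
  show ?thesis
  proof (intro bexI ballI)
    fix p q assume p: "p \<in> gbox N a" and q: "q \<in> gbox N b"
    show "\<eta> * t\<^sup>2 / 16 \<le> \<phi> ((1/2) *\<^sub>R (p + q)) - (\<phi> p + \<phi> q) / 2 + (\<kappa> + \<eta>) / 8 * (norm (p - q))\<^sup>2"
      unfolding Dn_def
    proof (rule box_bound[OF C HB HL H0 \<xi> Qv nv])
      show "\<bar>p0$i - \<xi>$i\<bar> \<le> t" for i using p0c[of i] vi[of i] by linarith
      show "p \<in> cube" using gbox_cube[OF N a(1)] p by blast
      show "q \<in> cube" using gbox_cube[OF N b(1)] q by blast
      show "\<bar>p$i - p0$i\<bar> \<le> 1 / real N" for i by (rule gbox_close[OF p a(2)])
      show "\<bar>q$i - (p0 + v)$i\<bar> \<le> 1 / real N" for i by (rule gbox_close[OF q b(2)])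
    qed (use ht hDt k0 e0 ke A1 in \<open>simp_all add: Dn_def\<close>)
  qed (use a b in auto)
qed

lemma (in prob_space) freq_AE:
  fixes U U' :: "nat \<Rightarrow> 'a \<Rightarrow> real^'d::finite"
  assumes ind: "indep_vars (\<lambda>_. borel) (\<lambda>k. case k of Inl j \<Rightarrow> U j | Inr j \<Rightarrow> U' j) UNIV"
    and UL: "\<And>j. distr M borel (U j) = Lm" and UL': "\<And>j. distr M borel (U' j) = Lm"
    and A: "A \<in> sets borel" and B: "B \<in> sets borel"
    and p: "p = measure Lm A * measure Lm B" and p0: "p > 0"
  shows "AE \<omega> in M. \<forall>\<^sub>F k in sequentially.
     real k * p / 2 < (\<Sum>j\<in>{1..k}. indicator A (U j \<omega>) * indicator B (U' j \<omega>) :: real)"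
proof -
  define UU where "UU = (\<lambda>k. case k of Inl j \<Rightarrow> U j | Inr j \<Rightarrow> U' j)"
  have rv: "random_variable borel (UU k)" for k
    using ind unfolding indep_vars_def UU_def by blast
  have mU[measurable]: "U j \<in> borel_measurable M" for j using rv[of "Inl j"] by (simp add: UU_def)
  have mU'[measurable]: "U' j \<in> borel_measurable M" for j using rv[of "Inr j"] by (simp add: UU_def)
  define X where "X = (\<lambda>j \<omega>. indicator A (U j \<omega>) * indicator B (U' j \<omega>) :: real)"
  have mX[measurable]: "X j \<in> borel_measurable M" for j unfolding X_def using A B by measurable
  define K where "K = (\<lambda>j::nat. {Inl j, Inr j :: nat + nat})"
  have indR: "indep_vars (\<lambda>j. PiM (K j) (\<lambda>_. borel)) (\<lambda>j \<omega>. restrict (\<lambda>i. UU i \<omega>) (K j)) UNIV"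
    by (rule indep_vars_restrict[OF ind[folded UU_def]]) (auto simp: K_def disjoint_family_on_def)
  define Y where "Y = (\<lambda>j (f :: nat + nat \<Rightarrow> real^'d). indicator A (f (Inl j)) * indicator B (f (Inr j)) :: real)"
  have mY: "Y j \<in> borel_measurable (PiM (K j) (\<lambda>_. borel))" for j
  proof -
    have "(\<lambda>f. f (Inl j)) \<in> measurable (PiM (K j) (\<lambda>_. borel)) (borel :: (real^'d) measure)"
      by (rule measurable_component_singleton) (simp add: K_def)
    moreover have "(\<lambda>f. f (Inr j)) \<in> measurable (PiM (K j) (\<lambda>_. borel)) (borel :: (real^'d) measure)"
      by (rule measurable_component_singleton) (simp add: K_def)
    ultimately show ?thesis unfolding Y_def using A B by measurable
  qed
  have indX: "indep_vars (\<lambda>_. borel) X UNIV"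
  proof -
    have "indep_vars (\<lambda>_. borel) (\<lambda>j \<omega>. Y j (restrict (\<lambda>i. UU i \<omega>) (K j))) UNIV"
      by (rule indep_vars_compose2[OF indR mY])
    moreover have "(\<lambda>j \<omega>. Y j (restrict (\<lambda>i. UU i \<omega>) (K j))) = X"
      by (auto simp: fun_eq_iff X_def Y_def K_def UU_def)
    ultimately show ?thesis by simp
  qed
  have EX: "expectation (X j) = p" for j
  proof -
    define E where "E = {\<omega> \<in> space M. U j \<omega> \<in> A \<and> U' j \<omega> \<in> B}"
    have Es: "E \<in> events" unfolding E_def using A B by measurable
    have "expectation (X j) = expectation (indicator E)"
      by (intro Bochner_Integration.integral_cong) (auto simp: X_def E_def indicator_def)
    also have "\<dots> = prob E" using Es by simp
    also have "E = (\<Inter>i\<in>{Inl j, Inr j}. UU i -` (case i of Inl _ \<Rightarrow> A | Inr _ \<Rightarrow> B) \<inter> space M)"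
      by (auto simp: E_def UU_def)
    also have "prob \<dots> = (\<Prod>i\<in>{Inl j, Inr j}. prob (UU i -` (case i of Inl _ \<Rightarrow> A | Inr _ \<Rightarrow> B) \<inter> space M))"
      by (rule indep_varsD[OF ind[folded UU_def]]) (auto simp: A B split: sum.split)
    also have "\<dots> = prob (U j -` A \<inter> space M) * prob (U' j -` B \<inter> space M)"
      by (simp add: UU_def)
    also have "prob (U j -` A \<inter> space M) = measure Lm A"
      using measure_distr[OF mU A, of j] UL[of j] by simp
    also have "prob (U' j -` B \<inter> space M) = measure Lm B"
      using measure_distr[OF mU' B, of j] UL'[of j] by simp
    finally show ?thesis using p by simp
  qed
  define Ev where "Ev = (\<lambda>k. {\<omega> \<in> space M. (\<Sum>j\<in>{1..k}. X j \<omega>) \<le> real k * p / 2})"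
  have Evs: "Ev k \<in> events" for k unfolding Ev_def by measurable
  have bound: "prob (Ev k) \<le> exp (- p\<^sup>2 / 2) ^ k" for k
  proof (cases "k = 0")
    case True then show ?thesis by simp
  next
    case False
    interpret H: Hoeffding_ineq M "{1..k}" X "\<lambda>_. 0" "\<lambda>_. 1" "\<Sum>i\<in>{1..k}. expectation (X i)"
    proof unfold_locales
      show "indep_vars (\<lambda>_. borel) X {1..k}" by (rule indep_vars_subset[OF indX]) auto
      show "AE x in M. X i x \<in> {0..1}" for i by (auto simp: X_def indicator_def)
    qed simp
    have mu: "(\<Sum>i\<in>{1..k}. expectation (X i)) = real k * p" using EX by simp
    have "prob {x \<in> space M. (\<Sum>i\<in>{1..k}. X i x) \<le> (\<Sum>i\<in>{1..k}. expectation (X i)) - real k * p / 2}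
        \<le> exp (-2 * (real k * p / 2)\<^sup>2 / (\<Sum>i\<in>{1..k}. (1 - 0)\<^sup>2))"
      using False p0 by (intro H.Hoeffding_ineq_le) auto
    also have "(\<Sum>i\<in>{1..k}. expectation (X i)) - real k * p / 2 = real k * p / 2" using mu by simp
    also have "-2 * (real k * p / 2)\<^sup>2 / (\<Sum>i\<in>{1..k}. (1 - 0::real)\<^sup>2) = real k * (- p\<^sup>2 / 2)"
      using False by (simp add: power2_eq_square field_simps)
    also have "exp (real k * (- p\<^sup>2 / 2)) = exp (- p\<^sup>2 / 2) ^ k" by (rule exp_of_nat_mult)
    finally show ?thesis unfolding Ev_def .
  qed
  have summ: "summable (\<lambda>k. prob (Ev k))"
  proof (rule summable_comparison_test[OF _ summable_geometric])
    show "\<exists>N. \<forall>n\<ge>N. norm (prob (Ev n)) \<le> exp (- p\<^sup>2 / 2) ^ n" using bound by auto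
    show "norm (exp (- p\<^sup>2 / 2)) < 1" using p0 by simp
  qed
  have "AE \<omega> in M. \<forall>\<^sub>F k in sequentially. \<omega> \<in> space M - Ev k"
    by (rule borel_cantelli_AE1[OF Evs _ summ]) (simp add: emeasure_eq_measure)
  then show ?thesis
  proof (rule eventually_mono)
    fix \<omega> assume "\<forall>\<^sub>F k in sequentially. \<omega> \<in> space M - Ev k"
    then show "\<forall>\<^sub>F k in sequentially. real k * p / 2 < (\<Sum>j\<in>{1..k}. indicator A (U j \<omega>) * indicator B (U' j \<omega>) :: real)"
      by (rule eventually_mono) (auto simp: Ev_def X_def not_le)
  qed
qed

lemma consts_ok:
  fixes HH Dn \<eta> :: real
  assumes HH: "HH \<ge> 1" and Dn: "Dn \<ge> 1" and e: "0 < \<eta>" "\<eta> \<le> 1"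
    and t_def: "t = \<eta> / (180 * HH * Dn^3)"
    and K_def: "K = 8 * HH * Dn^2 + 4 * Dn"
    and N_def: "N = nat \<lceil>4 * K / (\<eta> * t)\<rceil> + 1"
  shows "N \<ge> 1" "0 < t" "t \<le> 1" "1 / real N \<le> t" "2 * Dn * (1 / real N) \<le> t"
    "45 * HH * Dn^3 * t^3 + 8 * HH * Dn^2 * (1 / real N) * t + 4 * Dn * (1 / real N) * t \<le> \<eta> * t\<^sup>2 / 2"
proof -
  show "N \<ge> 1" unfolding N_def by simp
  have P: "HH * Dn^3 \<ge> 1" using HH Dn by (metis mult_ge1_I one_le_power)
  show t0: "0 < t" unfolding t_def using e P by simp
  show "t \<le> 1" unfolding t_def using e P by (simp add: divide_le_eq)
  have P2: "HH * Dn^2 \<ge> 1" using HH Dn by (metis mult_ge1_I one_le_power)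
  have K12: "K \<ge> 12" unfolding K_def using P2 Dn by linarith
  have KD: "K \<ge> 4 * Dn" unfolding K_def using HH Dn by (simp add: mult_nonneg_nonneg)
  have N1: "real N \<ge> 4 * K / (\<eta> * t)" unfolding N_def by linarith
  have pos: "4 * K / (\<eta> * t) > 0" using K12 e t0 by simp
  have hb: "1 / real N \<le> \<eta> * t / (4 * K)"
  proof -
    have Npos: "real N > 0" using N1 pos by linarith
    have "1 / real N \<le> 1 / (4 * K / (\<eta> * t))"
      by (rule divide_left_mono[OF N1]) (use mult_pos_pos[OF Npos pos] in auto)
    then show ?thesis by simp
  qed
  have hK: "1 / real N * K \<le> \<eta> * t / 4"
    using hb K12 by (simp add: le_divide_eq mult.commute)
  have hN: "0 \<le> 1 / real N" by simp
  show "1 / real N \<le> t"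
  proof -
    have "\<eta> * t / (4 * K) \<le> t" using e t0 K12 by (simp add: divide_le_eq mult_right_le_one_le)
    then show ?thesis using hb by linarith
  qed
  show "2 * Dn * (1 / real N) \<le> t"
  proof -
    have "2 * Dn * (1 / real N) \<le> K * (1 / real N)" using KD Dn by (intro mult_right_mono) auto
    also have "\<dots> \<le> \<eta> * t / 4" using hK by (simp add: mult.commute)
    also have "\<dots> \<le> t" using e t0 by simp
    finally show ?thesis .
  qed
  have a0: "45 * HH * Dn^3 * t = \<eta> / 4"
    unfolding t_def using P HH Dn by simp
  have a: "45 * HH * Dn^3 * t^3 = \<eta> * t\<^sup>2 / 4"
  proof -
    have "45 * HH * Dn^3 * t^3 = (45 * HH * Dn^3 * t) * t\<^sup>2" by (simp add: power2_eq_square power3_eq_cube mult_ac)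
    then show ?thesis using a0 by simp
  qed
  have b: "8 * HH * Dn^2 * (1 / real N) * t + 4 * Dn * (1 / real N) * t = (1 / real N * K) * t"
    unfolding K_def by (simp add: algebra_simps)
  have c: "(1 / real N * K) * t \<le> \<eta> * t / 4 * t" using hK t0 by (intro mult_right_mono) auto
  show "45 * HH * Dn^3 * t^3 + 8 * HH * Dn^2 * (1 / real N) * t + 4 * Dn * (1 / real N) * t \<le> \<eta> * t\<^sup>2 / 2"
  proof -
    have d: "\<eta> * t / 4 * t = \<eta> * t\<^sup>2 / 4" by (simp add: power2_eq_square)
    show ?thesis using a b c d by argo
  qed
qed

lemma cube_cbox: "cube = cbox (0::real^'d::finite) 1"
  by (auto simp: cube_def mem_box_cart)

lemma cube_sets[measurable]: "cube \<in> sets (borel :: (real^'d::finite) measure)"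
  unfolding cube_cbox by simp

lemma gbox_cbox: "gbox N a = cbox a (a + (\<chi> i. 1 / real N))"
  by (auto simp: gbox_def mem_box_cart)

lemma gbox_sets[measurable]: "gbox N a \<in> sets (borel :: (real^'d::finite) measure)"
  unfolding gbox_cbox by simp

lemma lam_gbox:
  fixes a :: "real^'d::finite"
  assumes N: "N \<ge> 1" and a: "a \<in> gridpts N"
  shows "measure lam (gbox N a) = (1 / real N) ^ CARD('d)"
proof -
  have sub: "gbox N a \<subseteq> cube" by (rule gbox_cube[OF N a])
  have "emeasure lam (gbox N a) = emeasure lborel (cube \<inter> gbox N a)"
    unfolding lam_def by (rule emeasure_restricted) simp_all
  also have "cube \<inter> gbox N a = gbox N a" using sub by blast
  finally have "measure lam (gbox N a) = measure lborel (gbox N a)" by (simp add: measure_def)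
  also have "\<dots> = (\<Prod>i\<in>UNIV. (a + (\<chi> i. 1 / real N))$i - a$i)"
    unfolding gbox_cbox
  proof (rule content_cbox_cart)
    have "a \<in> cbox a (a + (\<chi> i. 1 / real N))" by (simp add: mem_box_cart)
    then show "cbox a (a + (\<chi> i. 1 / real N)) \<noteq> {}" by blast
  qed
  also have "\<dots> = (1 / real N) ^ CARD('d)" by simp
  finally show ?thesis .
qed

lemma avg_bound:
  fixes f :: "nat \<Rightarrow> real"
  assumes f: "\<And>i. a \<le> f i \<and> f i \<le> 0"
  shows "a / 2 \<le> 1 / (2 * real n) * (\<Sum>i=1..n. f i) \<and> 1 / (2 * real n) * (\<Sum>i=1..n. f i) \<le> 0"
proof (cases "n = 0")
  case True
  have "a \<le> 0" using f[of 0] by linarith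
  then show ?thesis using True by simp
next
  case False
  have s1: "real n * a \<le> (\<Sum>i=1..n. f i)" using sum_mono[of "{1..n}" "\<lambda>_. a" f] f by simp
  have s2: "(\<Sum>i=1..n. f i) \<le> 0" using f by (simp add: sum_nonpos)
  have np: "real n > 0" using False by simp
  have "a / 2 = 1 / (2 * real n) * (real n * a)" using np by simp
  also have "\<dots> \<le> 1 / (2 * real n) * (\<Sum>i=1..n. f i)" using s1 np by (intro mult_left_mono) auto
  finally have l: "a / 2 \<le> 1 / (2 * real n) * (\<Sum>i=1..n. f i)" .
  have "1 / (2 * real n) * (\<Sum>i=1..n. f i) = (\<Sum>i=1..n. f i) / (2 * real n)" by simp
  also have "\<dots> \<le> 0" by (rule divide_nonpos_pos[OF s2]) (use np in simp)
  finally show ?thesis using l by simp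
qed

lemma L_hat_bounds:
  fixes G :: "real^'d::finite \<Rightarrow> real^'d"
  assumes D: "D \<in> dis_class A Dm" and Dm: "0 < Dm" "Dm < 1/2"
  shows "ln Dm \<le> L_hat Y Z n G D \<omega> \<and> L_hat Y Z n G D \<omega> \<le> 0"
proof -
  have lD: "ln Dm < 0" using Dm by simp
  have D01: "\<And>u. 0 \<le> D u \<and> D u \<le> 1" and Dout: "\<And>u. u \<notin> cube \<Longrightarrow> D u = 0"
    and Din: "\<And>u. u \<in> cube \<Longrightarrow> Dm \<le> D u \<and> D u \<le> 1 - Dm"
    using D unfolding dis_class_def by auto
  have t1: "ln Dm \<le> ln (D y) \<and> ln (D y) \<le> 0" for y
  proof (cases "y \<in> cube")
    case True
    then have "Dm \<le> D y" "D y \<le> 1" using Din D01 by auto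
    then show ?thesis using Dm by (simp add: ln_le_zero_iff)
  next
    case False then show ?thesis using Dout lD by simp
  qed
  have t2: "ln Dm \<le> ln (1 - D y) \<and> ln (1 - D y) \<le> 0" for y
  proof (cases "y \<in> cube")
    case True
    have "Dm \<le> D y \<and> D y \<le> 1 - Dm" "0 \<le> D y" using Din[OF True] D01[of y] by auto
    then have "Dm \<le> 1 - D y" "1 - D y \<le> 1" by linarith+
    then show ?thesis using Dm by (simp add: ln_le_zero_iff)
  next
    case False then show ?thesis using Dout lD by simp
  qed
  have a1: "ln Dm / 2 \<le> 1 / (2 * real n) * (\<Sum>i=1..n. ln (D (Y i \<omega>))) \<and> 1 / (2 * real n) * (\<Sum>i=1..n. ln (D (Y i \<omega>))) \<le> 0"
    by (rule avg_bound) (rule t1)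
  have a2: "ln Dm / 2 \<le> 1 / (2 * real n) * (\<Sum>i=1..n. ln (1 - D (G (Z i \<omega>)))) \<and> 1 / (2 * real n) * (\<Sum>i=1..n. ln (1 - D (G (Z i \<omega>)))) \<le> 0"
    by (rule avg_bound) (rule t2)
  show ?thesis unfolding L_hat_def using a1 a2 by linarith
qed

lemma P_hat_zero:
  fixes \<phi> :: "real^'d::finite \<Rightarrow> real"
  assumes sc: "strongly_convex \<kappa> \<phi>" and U: "\<And>j. U j \<omega> \<in> cube" "\<And>j. U' j \<omega> \<in> cube"
  shows "P_hat m U U' \<kappa> n \<phi> \<omega> = 0"
proof -
  have "relu (\<phi> ((1/2) *\<^sub>R (U j \<omega> + U' j \<omega>)) - (\<phi> (U j \<omega>) + \<phi> (U' j \<omega>)) / 2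
            + \<kappa> / 8 * (norm (U j \<omega> - U' j \<omega>))\<^sup>2) = 0" for j
  proof -
    have "\<phi> ((1/2) *\<^sub>R (U j \<omega> + U' j \<omega>)) \<le> (\<phi> (U j \<omega>) + \<phi> (U' j \<omega>)) / 2 - \<kappa> / 8 * (norm (U j \<omega> - U' j \<omega>))\<^sup>2"
      using sc U(1)[of j] U(2)[of j] unfolding strongly_convex_def by blast
    then show ?thesis unfolding relu_def by simp
  qed
  then show ?thesis unfolding P_hat_def by simp
qed

lemma P_hat_lower:
  fixes \<phi> :: "real^'d::finite \<Rightarrow> real"
  assumes box: "\<And>p q. p \<in> A \<Longrightarrow> q \<in> B \<Longrightarrow> c0 \<le> \<phi> ((1/2) *\<^sub>R (p + q)) - (\<phi> p + \<phi> q) / 2 + \<kappa> / 8 * (norm (p - q))\<^sup>2"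
    and c0: "c0 \<ge> 0"
    and fr: "real (m n) * pp / 2 < (\<Sum>j\<in>{1..m n}. indicator A (U j \<omega>) * indicator B (U' j \<omega>) :: real)"
  shows "c0 * pp / 2 \<le> P_hat m U U' \<kappa> n \<phi> \<omega>"
proof -
  have mpos: "m n \<noteq> 0" using fr by (cases "m n = 0") auto
  then have mp: "real (m n) > 0" by simp
  have t: "c0 * (indicator A (U j \<omega>) * indicator B (U' j \<omega>)) \<le>
      relu (\<phi> ((1/2) *\<^sub>R (U j \<omega> + U' j \<omega>)) - (\<phi> (U j \<omega>) + \<phi> (U' j \<omega>)) / 2
            + \<kappa> / 8 * (norm (U j \<omega> - U' j \<omega>))\<^sup>2)" for j
  proof (cases "U j \<omega> \<in> A \<and> U' j \<omega> \<in> B")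
    case True
    then show ?thesis using box[of "U j \<omega>" "U' j \<omega>"] unfolding relu_def by simp
  next
    case False
    then have "indicator A (U j \<omega>) * indicator B (U' j \<omega>) = (0::real)" by (auto simp: indicator_def)
    then have z: "c0 * (indicator A (U j \<omega>) * indicator B (U' j \<omega>)) = (0::real)" by simp
    show ?thesis unfolding relu_def by (subst z) simp
  qed
  have "c0 * pp / 2 = 1 / real (m n) * (c0 * (real (m n) * pp / 2))" using mp by simp
  also have "\<dots> \<le> 1 / real (m n) * (c0 * (\<Sum>j\<in>{1..m n}. indicator A (U j \<omega>) * indicator B (U' j \<omega>)))"
    using fr c0 mp by (intro mult_left_mono) auto
  also have "\<dots> \<le> P_hat m U U' \<kappa> n \<phi> \<omega>"
    unfolding P_hat_def sum_distrib_left[symmetric, of c0, symmetric]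
    using mp by (intro mult_left_mono sum_mono t) auto
  finally show ?thesis .
qed

lemma core_eq:
  fixes F :: "'a \<Rightarrow> 'b \<Rightarrow> real"
  assumes sub: "S2 \<subseteq> S1" and p0: "\<phi>0 \<in> S2"
    and le: "\<And>\<phi> D. \<phi> \<in> S1 \<Longrightarrow> \<phi> \<notin> S2 \<Longrightarrow> D \<in> HD \<Longrightarrow> F \<phi>0 D \<le> F \<phi> D"
  shows "(INF \<phi> \<in> S1. SUP D \<in> HD. ereal (F \<phi> D)) = (INF \<phi> \<in> S2. SUP D \<in> HD. ereal (F \<phi> D))"
proof (rule antisym)
  show "(INF \<phi> \<in> S1. SUP D \<in> HD. ereal (F \<phi> D)) \<le> (INF \<phi> \<in> S2. SUP D \<in> HD. ereal (F \<phi> D))"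
    by (rule INF_superset_mono[OF sub order.refl])
  show "(INF \<phi> \<in> S2. SUP D \<in> HD. ereal (F \<phi> D)) \<le> (INF \<phi> \<in> S1. SUP D \<in> HD. ereal (F \<phi> D))"
  proof (rule INF_greatest)
    fix \<phi> assume \<phi>: "\<phi> \<in> S1"
    show "(INF \<phi> \<in> S2. SUP D \<in> HD. ereal (F \<phi> D)) \<le> (SUP D \<in> HD. ereal (F \<phi> D))"
    proof (cases "\<phi> \<in> S2")
      case True then show ?thesis by (rule INF_lower)
    next
      case False
      have "(INF \<phi> \<in> S2. SUP D \<in> HD. ereal (F \<phi> D)) \<le> (SUP D \<in> HD. ereal (F \<phi>0 D))"
        using p0 by (rule INF_lower)
      also have "\<dots> \<le> (SUP D \<in> HD. ereal (F \<phi> D))"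
        using le[OF \<phi> False] by (intro SUP_mono) auto
      finally show ?thesis .
    qed
  qed
qed

theorem proposition8:
  fixes M :: "'w measure"
    and pstar :: "real^'d::finite \<Rightarrow> real" and \<alpha> :: real
    and phistar :: "real^'d \<Rightarrow> real" and Mc :: real
    and phi_eps :: "real \<Rightarrow> real^'d \<Rightarrow> real" and A_phi :: "real \<Rightarrow> nat list"
    and Ht :: "real \<Rightarrow> real"
    and A_D :: "real \<Rightarrow> nat list" and Dmin :: "real \<Rightarrow> real"
    and H_dis :: "real \<Rightarrow> (real^'d \<Rightarrow> real) set"
    and m :: "nat \<Rightarrow> nat"
    and Y Z U U' :: "nat \<Rightarrow> 'w \<Rightarrow> real^'d"
    and \<epsilon> \<eta> :: real
  defines "mustar \<equiv> density lborel (\<lambda>x. ennreal (pstar x))"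
    and "\<beta> \<equiv> 1 / Mc"
  assumes M_prob: "prob_space M"
    \<comment> \<open>samples\<close>
    and Y_indep: "prob_space.indep_vars M (\<lambda>_. borel) Y UNIV"
    and Y_law: "\<And>i. distr M borel (Y i) = mustar"
    and Z_indep: "prob_space.indep_vars M (\<lambda>_. borel) Z UNIV"
    and Z_law: "\<And>i. distr M borel (Z i) = lam"
    and UU_indep: "prob_space.indep_vars M (\<lambda>_. borel)
                     (\<lambda>k. case k of Inl j \<Rightarrow> U j | Inr j \<Rightarrow> U' j) UNIV"
    and U_law: "\<And>j. distr M borel (U j) = lam"
    and U'_law: "\<And>j. distr M borel (U' j) = lam"
    and m_mono: "mono m" and m_lim: "filterlim m at_top sequentially"
    \<comment> \<open>(P): target density\<close>
    and pstar_meas: "pstar \<in> borel_measurable lborel"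
    and mustar_prob: "prob_space mustar"
    and pstar_pos: "\<And>x. x \<in> cube \<Longrightarrow> pstar x > 0"
    and pstar_zero: "\<And>x. x \<notin> cube \<Longrightarrow> pstar x = 0"
    and alpha: "0 < \<alpha>" "\<alpha> < 1"
    and pstar_reg: "Ck_alpha 1 \<alpha> pstar"
    \<comment> \<open>(P): Brenier potential\<close>
    and phistar_reg: "Ck_alpha 3 \<alpha> phistar"
    and phistar_convex: "convex_on cube phistar"
    and phistar_push: "pushfwd (grad phistar) = mustar"
    and Mc_gt: "1 < Mc"
    and phistar_hess: "hess_between (1 / Mc) Mc phistar"
    \<comment> \<open>(P): approximating ReCU potentials and potential classes\<close>
    and phi_eps_net: "\<And>e. e > 0 \<Longrightarrow> is_network_on UNIV recu (A_phi e) (phi_eps e)"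
    and phi_eps_hess: "\<And>e. e > 0 \<Longrightarrow> hess_between (1 / (2 * Mc)) (2 * Mc) (phi_eps e)"
    and phi_eps_js: "\<And>e. e > 0 \<Longrightarrow> d_JS mustar (pushfwd (grad (phi_eps e))) \<le> e"
    and Ht_ge: "\<And>e. e > 0 \<Longrightarrow> ck_norm 2 1 (phi_eps e) \<le> ennreal (Ht e)"
    \<comment> \<open>(D'): discriminator classes\<close>
    and Dmin_range: "\<And>e. e > 0 \<Longrightarrow> 0 < Dmin e \<and> Dmin e < 1 / 2"
    and H_dis_sub: "\<And>e. e > 0 \<Longrightarrow> H_dis e \<subseteq> dis_class (A_D e) (Dmin e)"
    and H_dis_cpt: "\<And>e. e > 0 \<Longrightarrow> rel_compact_sup (H_dis e)"
    and H_dis_approx: "\<And>e \<phi>. e > 0 \<Longrightarrow> \<phi> \<in> H_pot_sc (\<beta> / 2) (A_phi e) (Ht e) \<Longrightarrow>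
         \<exists>D \<in> H_dis e. \<forall>p. p \<in> borel_measurable borel \<longrightarrow> (\<forall>x. 0 \<le> p x) \<longrightarrow>
            pushfwd (grad \<phi>) = density lborel (\<lambda>x. ennreal (p x)) \<longrightarrow>
            L_gan mustar (grad \<phi>) (D_opt pstar p) - L_gan mustar (grad \<phi>) D \<le> e"
    \<comment> \<open>parameters\<close>
    and eps_pos: "\<epsilon> > 0"
    and eta: "0 < \<eta>" "\<eta> < \<beta> / 2"
  shows "\<exists>\<gamma> > 0. AE \<omega> in M. \<exists>nbar. \<forall>n \<ge> nbar.
     (INF \<phi> \<in> H_pot (A_phi \<epsilon>) (Ht \<epsilon>). SUP D \<in> H_dis \<epsilon>.
        ereal (L_hat Y Z n (grad \<phi>) D \<omega> + \<gamma> * P_hat m U U' (\<beta> / 2) n \<phi> \<omega>))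
   = (INF \<phi> \<in> H_pot_sc (\<beta> / 2 - \<eta>) (A_phi \<epsilon>) (Ht \<epsilon>). SUP D \<in> H_dis \<epsilon>.
        ereal (L_hat Y Z n (grad \<phi>) D \<omega> + \<gamma> * P_hat m U U' (\<beta> / 2) n \<phi> \<omega>))"
proof -
  interpret P: prob_space M by (rule M_prob)
  have Mc0: "Mc > 0" using Mc_gt by simp
  have b0: "0 < \<beta>" "\<beta> < 1" unfolding \<beta>_def using Mc_gt by auto
  define \<kappa> where "\<kappa> = \<beta> / 2 - \<eta>"
  have k0: "0 \<le> \<kappa>" unfolding \<kappa>_def using eta by simp
  have ke: "\<kappa> + \<eta> = \<beta> / 2" unfolding \<kappa>_def by simp
  have ke1: "\<kappa> + \<eta> \<le> 1" using ke b0 by simp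
  have e1: "\<eta> \<le> 1" using eta b0 by simp
  define HH where "HH = max (Ht \<epsilon>) 0 + 1"
  have HH1: "HH \<ge> 1" unfolding HH_def by simp
  define Dn where "Dn = real CARD('d)"
  have Dn1: "Dn \<ge> 1" unfolding Dn_def by (simp add: Suc_le_eq)
  define t where "t = \<eta> / (180 * HH * Dn^3)"
  define K where "K = 8 * HH * Dn^2 + 4 * Dn"
  define N where "N = nat \<lceil>4 * K / (\<eta> * t)\<rceil> + 1"
  note cs = consts_ok[OF HH1 Dn1 eta(1) e1 t_def K_def N_def]
  define c0 where "c0 = \<eta> * t\<^sup>2 / 16"
  have c00: "c0 > 0" unfolding c0_def using cs(2) eta by simp
  define pp where "pp = (1 / real N) ^ CARD('d) * (1 / real N) ^ CARD('d)"
  have pp0: "pp > 0" unfolding pp_def using cs(1) by simp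
  define c where "c = c0 * pp / 2"
  have c_pos: "c > 0" unfolding c_def using c00 pp0 by simp
  define \<gamma> where "\<gamma> = (1 + \<bar>ln (Dmin \<epsilon>)\<bar>) / c"
  have g0: "\<gamma> > 0" unfolding \<gamma>_def using c_pos by (simp add: add_pos_nonneg)
  have gc: "\<gamma> * c = 1 + \<bar>ln (Dmin \<epsilon>)\<bar>" unfolding \<gamma>_def using c_pos by simp
  define G where "G = (gridpts N :: (real^'d) set) \<times> (gridpts N :: (real^'d) set)"
  have finG: "finite G" unfolding G_def by (simp add: finite_gridpts)
  define UU where "UU = (\<lambda>k. case k of Inl j \<Rightarrow> U j | Inr j \<Rightarrow> U' j)"
  have rv: "UU k \<in> borel_measurable M" for k
    using UU_indep unfolding P.indep_vars_def UU_def by blast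
  have mU[measurable]: "U j \<in> borel_measurable M" for j using rv[of "Inl j"] by (simp add: UU_def)
  have mU'[measurable]: "U' j \<in> borel_measurable M" for j using rv[of "Inr j"] by (simp add: UU_def)
  have AElam: "AE x in lam. x \<in> (cube :: (real^'d) set)"
    unfolding lam_def by (subst AE_density) (auto simp: indicator_def)
  have AEc1: "AE \<omega> in M. U j \<omega> \<in> cube" for j
  proof -
    have "AE x in distr M borel (U j). x \<in> cube" unfolding U_law[of j] by (rule AElam)
    then show ?thesis by (subst (asm) AE_distr_iff) auto
  qed
  have AEc2: "AE \<omega> in M. U' j \<omega> \<in> cube" for j
  proof -
    have "AE x in distr M borel (U' j). x \<in> cube" unfolding U'_law[of j] by (rule AElam)
    then show ?thesis by (subst (asm) AE_distr_iff) auto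
  qed
  have AEcube: "AE \<omega> in M. \<forall>j. U j \<omega> \<in> cube \<and> U' j \<omega> \<in> cube"
    using AEc1 AEc2 by (simp add: AE_all_countable)
  have AEfreq: "AE \<omega> in M. \<forall>ab\<in>G. \<forall>\<^sub>F k in sequentially.
     real k * pp / 2 < (\<Sum>j\<in>{1..k}. indicator (gbox N (fst ab)) (U j \<omega>) * indicator (gbox N (snd ab)) (U' j \<omega>) :: real)"
  proof (rule eventually_ball_finite[OF finG], rule ballI)
    fix ab assume ab: "ab \<in> G"
    show "AE \<omega> in M. \<forall>\<^sub>F k in sequentially.
     real k * pp / 2 < (\<Sum>j\<in>{1..k}. indicator (gbox N (fst ab)) (U j \<omega>) * indicator (gbox N (snd ab)) (U' j \<omega>) :: real)"
    proof (rule P.freq_AE[OF UU_indep U_law U'_law])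
      show "gbox N (fst ab) \<in> sets borel" "gbox N (snd ab) \<in> sets borel" by simp_all
      show "pp = measure lam (gbox N (fst ab)) * measure lam (gbox N (snd ab))"
        using ab cs(1) unfolding G_def pp_def by (auto simp: lam_gbox)
    qed (rule pp0)
  qed
  define \<phi>0 where "\<phi>0 = phi_eps \<epsilon>"
  have C0: "C2 \<phi>0" unfolding \<phi>0_def by (rule C2_network[OF phi_eps_net[OF eps_pos]])
  have sc0: "strongly_convex (\<beta> / 2) \<phi>0"
  proof -
    have "strongly_convex (1 / (2 * Mc)) \<phi>0"
      by (rule hess_sc[OF C0]) (use phi_eps_hess[OF eps_pos] in \<open>simp add: \<phi>0_def\<close>)
    moreover have "1 / (2 * Mc) = \<beta> / 2" unfolding \<beta>_def by simp
    ultimately show ?thesis by simp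
  qed
  have p0S2: "\<phi>0 \<in> H_pot_sc (\<beta> / 2 - \<eta>) (A_phi \<epsilon>) (Ht \<epsilon>)"
    unfolding H_pot_sc_def H_pot_def
    using phi_eps_net[OF eps_pos] Ht_ge[OF eps_pos] sc_mono[OF sc0, of "\<beta> / 2 - \<eta>"] eta
    by (simp add: \<phi>0_def)
  have sub: "H_pot_sc (\<beta> / 2 - \<eta>) (A_phi \<epsilon>) (Ht \<epsilon>) \<subseteq> H_pot (A_phi \<epsilon>) (Ht \<epsilon>)"
    unfolding H_pot_sc_def by blast
  have vbox: "\<exists>ab\<in>G. \<forall>p\<in>gbox N (fst ab). \<forall>q\<in>gbox N (snd ab).
      c0 \<le> \<phi> ((1/2) *\<^sub>R (p + q)) - (\<phi> p + \<phi> q) / 2 + (\<beta> / 2) / 8 * (norm (p - q))\<^sup>2"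
    if \<phi>1: "\<phi> \<in> H_pot (A_phi \<epsilon>) (Ht \<epsilon>)" and \<phi>2: "\<phi> \<notin> H_pot_sc (\<beta> / 2 - \<eta>) (A_phi \<epsilon>) (Ht \<epsilon>)" for \<phi>
  proof -
    have net: "is_network_on UNIV recu (A_phi \<epsilon>) \<phi>" and ck: "ck_norm 2 1 \<phi> \<le> ennreal (Ht \<epsilon>)"
      using \<phi>1 unfolding H_pot_def by auto
    have nsc: "\<not> strongly_convex \<kappa> \<phi>" using \<phi>1 \<phi>2 unfolding H_pot_sc_def \<kappa>_def by blast
    have HB: "\<bar>pdl [i, j] \<phi> x\<bar> \<le> HH" if "x \<in> cube" for x i j
      using ck_bound_val[OF ck that, of "[i, j]"] unfolding HH_def by simp
    have HL: "\<bar>pdl [i, j] \<phi> x - pdl [i, j] \<phi> y\<bar> \<le> HH * dist x y" if "x \<in> cube" "y \<in> cube" for x y i j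
    proof -
      have "\<bar>pdl [i, j] \<phi> x - pdl [i, j] \<phi> y\<bar> \<le> max (Ht \<epsilon>) 0 * dist x y"
        using ck_bound_lip[OF ck that, of "[i, j]"] by simp
      also have "\<dots> \<le> HH * dist x y" unfolding HH_def by (intro mult_right_mono) auto
      finally show ?thesis .
    qed
    have vb: "\<exists>a\<in>gridpts N. \<exists>b\<in>gridpts N. \<forall>p\<in>gbox N a. \<forall>q\<in>gbox N b.
       \<eta> * t\<^sup>2 / 16 \<le> \<phi> ((1/2) *\<^sub>R (p + q)) - (\<phi> p + \<phi> q) / 2 + (\<kappa> + \<eta>) / 8 * (norm (p - q))\<^sup>2"
    proof (rule viol_box)
      show "C2 \<phi>" by (rule C2_network[OF net])
      show "\<bar>pdl [i, j] \<phi> x\<bar> \<le> HH" if "x \<in> cube" for x i j by (rule HB[OF that])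
      show "\<bar>pdl [i, j] \<phi> x - pdl [i, j] \<phi> y\<bar> \<le> HH * dist x y" if "x \<in> cube" "y \<in> cube" for x y i j
        by (rule HL[OF that])
      show "0 \<le> HH" using HH1 by simp
      show "\<not> strongly_convex \<kappa> \<phi>" by (rule nsc)
      show "1 \<le> N" by (rule cs(1))
      show "0 < t" by (rule cs(2))
      show "t \<le> 1" by (rule cs(3))
      show "1 / real N \<le> t" by (rule cs(4))
      show "2 * real CARD('d) * (1 / real N) \<le> t" using cs(5) unfolding Dn_def .
      show "0 \<le> \<kappa>" by (rule k0)
      show "0 \<le> \<eta>" using eta by simp
      show "\<kappa> + \<eta> \<le> 1" by (rule ke1)
      show "45 * HH * real CARD('d) ^ 3 * t ^ 3 + 8 * HH * real CARD('d) ^ 2 * (1 / real N) * t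
          + 4 * real CARD('d) * (1 / real N) * t \<le> \<eta> * t\<^sup>2 / 2"
        using cs(6) unfolding Dn_def .
    qed
    then obtain a b where a: "a \<in> gridpts N" and b: "b \<in> gridpts N" and
      ab: "\<forall>p\<in>gbox N a. \<forall>q\<in>gbox N b.
       \<eta> * t\<^sup>2 / 16 \<le> \<phi> ((1/2) *\<^sub>R (p + q)) - (\<phi> p + \<phi> q) / 2 + (\<kappa> + \<eta>) / 8 * (norm (p - q))\<^sup>2"
      by blast
    show ?thesis
      using a b ab unfolding G_def c0_def ke by (intro bexI[of _ "(a, b)"]) auto
  qed
  have main: "\<exists>nbar. \<forall>n\<ge>nbar.
     (INF \<phi> \<in> H_pot (A_phi \<epsilon>) (Ht \<epsilon>). SUP D \<in> H_dis \<epsilon>.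
        ereal (L_hat Y Z n (grad \<phi>) D \<omega> + \<gamma> * P_hat m U U' (\<beta> / 2) n \<phi> \<omega>))
   = (INF \<phi> \<in> H_pot_sc (\<beta> / 2 - \<eta>) (A_phi \<epsilon>) (Ht \<epsilon>). SUP D \<in> H_dis \<epsilon>.
        ereal (L_hat Y Z n (grad \<phi>) D \<omega> + \<gamma> * P_hat m U U' (\<beta> / 2) n \<phi> \<omega>))"
    if cu: "\<forall>j. U j \<omega> \<in> cube \<and> U' j \<omega> \<in> cube"
      and fr: "\<forall>ab\<in>G. \<forall>\<^sub>F k in sequentially.
     real k * pp / 2 < (\<Sum>j\<in>{1..k}. indicator (gbox N (fst ab)) (U j \<omega>) * indicator (gbox N (snd ab)) (U' j \<omega>) :: real)"
    for \<omega>
  proof -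
    have "\<forall>\<^sub>F k in sequentially. \<forall>ab\<in>G.
     real k * pp / 2 < (\<Sum>j\<in>{1..k}. indicator (gbox N (fst ab)) (U j \<omega>) * indicator (gbox N (snd ab)) (U' j \<omega>) :: real)"
      by (rule eventually_ball_finite[OF finG fr])
    then obtain K0 where K0: "\<And>k. k \<ge> K0 \<Longrightarrow> \<forall>ab\<in>G.
     real k * pp / 2 < (\<Sum>j\<in>{1..k}. indicator (gbox N (fst ab)) (U j \<omega>) * indicator (gbox N (snd ab)) (U' j \<omega>) :: real)"
      unfolding eventually_sequentially by blast
    have "\<forall>\<^sub>F n in sequentially. K0 \<le> m n" using m_lim unfolding filterlim_at_top by blast
    then obtain nbar where nbar: "\<And>n. n \<ge> nbar \<Longrightarrow> K0 \<le> m n" unfolding eventually_sequentially by blast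
    show ?thesis
    proof (intro exI[of _ nbar] allI impI)
      fix n assume n: "n \<ge> nbar"
      have frn: "\<forall>ab\<in>G. real (m n) * pp / 2 < (\<Sum>j\<in>{1..m n}. indicator (gbox N (fst ab)) (U j \<omega>) * indicator (gbox N (snd ab)) (U' j \<omega>) :: real)"
        using K0[OF nbar[OF n]] .
      have P0: "P_hat m U U' (\<beta> / 2) n \<phi>0 \<omega> = 0"
        by (rule P_hat_zero[OF sc0]) (use cu in auto)
      show "(INF \<phi> \<in> H_pot (A_phi \<epsilon>) (Ht \<epsilon>). SUP D \<in> H_dis \<epsilon>.
        ereal (L_hat Y Z n (grad \<phi>) D \<omega> + \<gamma> * P_hat m U U' (\<beta> / 2) n \<phi> \<omega>))
   = (INF \<phi> \<in> H_pot_sc (\<beta> / 2 - \<eta>) (A_phi \<epsilon>) (Ht \<epsilon>). SUP D \<in> H_dis \<epsilon>.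
        ereal (L_hat Y Z n (grad \<phi>) D \<omega> + \<gamma> * P_hat m U U' (\<beta> / 2) n \<phi> \<omega>))"
      proof (rule core_eq[OF sub p0S2])
        fix \<phi> D :: "real^'d \<Rightarrow> real" assume \<phi>1: "\<phi> \<in> H_pot (A_phi \<epsilon>) (Ht \<epsilon>)"
          and \<phi>2: "\<phi> \<notin> H_pot_sc (\<beta> / 2 - \<eta>) (A_phi \<epsilon>) (Ht \<epsilon>)" and D: "D \<in> H_dis \<epsilon>"
        have Dc: "D \<in> dis_class (A_D \<epsilon>) (Dmin \<epsilon>)" using H_dis_sub[OF eps_pos] D by blast
        have Dm: "0 < Dmin \<epsilon>" "Dmin \<epsilon> < 1/2" using Dmin_range[OF eps_pos] by auto
        have L0: "L_hat Y Z n (grad \<phi>0) D \<omega> \<le> 0"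
          using L_hat_bounds[OF Dc Dm, where Y=Y and Z=Z and n=n and G="grad \<phi>0" and \<omega>=\<omega>] by (rule conjunct2)
        have L1: "ln (Dmin \<epsilon>) \<le> L_hat Y Z n (grad \<phi>) D \<omega>"
          using L_hat_bounds[OF Dc Dm, where Y=Y and Z=Z and n=n and G="grad \<phi>" and \<omega>=\<omega>] by (rule conjunct1)
        obtain ab where ab: "ab \<in> G" and box: "\<forall>p\<in>gbox N (fst ab). \<forall>q\<in>gbox N (snd ab).
          c0 \<le> \<phi> ((1/2) *\<^sub>R (p + q)) - (\<phi> p + \<phi> q) / 2 + (\<beta> / 2) / 8 * (norm (p - q))\<^sup>2"
          using vbox[OF \<phi>1 \<phi>2] by blast
        have frab: "real (m n) * pp / 2 < (\<Sum>j\<in>{1..m n}. indicator (gbox N (fst ab)) (U j \<omega>) * indicator (gbox N (snd ab)) (U' j \<omega>) :: real)"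
          by (rule bspec[OF frn ab])
        have Pc: "c \<le> P_hat m U U' (\<beta> / 2) n \<phi> \<omega>"
          unfolding c_def
        proof (rule P_hat_lower[where m=m and n=n and U=U and U'=U' and \<omega>=\<omega> and pp=pp
               and A="gbox N (fst ab)" and B="gbox N (snd ab)", OF _ _ frab])
          show "c0 \<le> \<phi> ((1/2) *\<^sub>R (p + q)) - (\<phi> p + \<phi> q) / 2 + (\<beta> / 2) / 8 * (norm (p - q))\<^sup>2"
            if "p \<in> gbox N (fst ab)" "q \<in> gbox N (snd ab)" for p q
            using bspec[OF bspec[OF box that(1)] that(2)] .
          show "0 \<le> c0" using c00 by simp
        qed
        have "\<gamma> * c \<le> \<gamma> * P_hat m U U' (\<beta> / 2) n \<phi> \<omega>" using Pc g0 by simp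
        then have "- ln (Dmin \<epsilon>) \<le> \<gamma> * P_hat m U U' (\<beta> / 2) n \<phi> \<omega>" using gc by linarith
        then show "L_hat Y Z n (grad \<phi>0) D \<omega> + \<gamma> * P_hat m U U' (\<beta> / 2) n \<phi>0 \<omega>
            \<le> L_hat Y Z n (grad \<phi>) D \<omega> + \<gamma> * P_hat m U U' (\<beta> / 2) n \<phi> \<omega>"
          using L0 L1 P0 by simp
      qed
    qed
  qed
  show ?thesis
  proof (intro exI[of _ \<gamma>] conjI g0)
    show "AE \<omega> in M. \<exists>nbar. \<forall>n\<ge>nbar.
     (INF \<phi> \<in> H_pot (A_phi \<epsilon>) (Ht \<epsilon>). SUP D \<in> H_dis \<epsilon>.
        ereal (L_hat Y Z n (grad \<phi>) D \<omega> + \<gamma> * P_hat m U U' (\<beta> / 2) n \<phi> \<omega>))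
   = (INF \<phi> \<in> H_pot_sc (\<beta> / 2 - \<eta>) (A_phi \<epsilon>) (Ht \<epsilon>). SUP D \<in> H_dis \<epsilon>.
        ereal (L_hat Y Z n (grad \<phi>) D \<omega> + \<gamma> * P_hat m U U' (\<beta> / 2) n \<phi> \<omega>))"
      using eventually_conj[OF AEcube AEfreq]
      apply (rule eventually_mono)
      apply (elim conjE)
      apply (rule main)
       apply assumption
      apply assumption
      done
  qed
qed


end
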